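(* For the symmetric two-user Gaussian broadcast channel with feedback with parameters $(\sigma_s^2,\rho_s,\sigma_z^2,\rho_z)$ and every $0<D\le\sigma_s^2$, let $D_{\mathrm{th}}=\frac{\sigma_s^2(2-\rho_z-|\rho_s|)}{2-\rho_z}$. Then $E(D)\le E_{\mathrm{OL}}(D)$ (indeed the minimal energy per source-pair sample required by the uncoded joint source-channel Ozarow–Leung-type linear feedback scheme is at most $E_{\mathrm{OL}}(D)$), where $$E_{\mathrm{OL}}(D)=\frac{2\sigma_z^2}{3-\rho_z}\log\!\Big(\frac{\sigma_s^2(1+|\rho_s|)}{D+(2-\rho_z)(D-\sigma_s^2)+\sigma_s^2|\rho_s|}\Big)\quad\text{if } D\ge D_{\mathrm{th}},$$ $$E_{\mathrm{OL}}(D)=2\sigma_z^2\Big(\log\!\Big(\frac{(2-\rho_z-|\rho_s|)\sigma_s^2}{(2-\rho_z)D}\Big)+\frac{1}{3-\rho_z}\log\!\Big(\frac{(2-\rho_z)(1+|\rho_s|)}{2-\rho_z-|\rho_s|}\Big)\Big)\quad\text{if } D<D_{\mathrm{th}},$$ with $\log$ the natural logarithm.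
   Context: Setup: An encoder observes $m$ i.i.d. pairs $(S_{1,j},S_{2,j})\sim\mathcal N(0,\mathsf Q_s)$, $j=1,\dots,m$, with $\mathsf Q_s=\sigma_s^2\begin{pmatrix}1&\rho_s\\\rho_s&1\end{pmatrix}$, $|\rho_s|<1$. The channel is used $n$ times; at time $k$, receiver $i\in\{1,2\}$ observes $Y_{i,k}=X_k+Z_{i,k}$, where the pairs $(Z_{1,k},Z_{2,k})\sim\mathcal N(0,\mathsf Q_z)$ are i.i.d. over $k$ and independent of the sources, $\mathsf Q_z=\sigma_z^2\begin{pmatrix}1&\rho_z\\\rho_z&1\end{pmatrix}$, $|\rho_z|<1$; all signals are real. The encoder has noiseless causal feedback of both outputs: $X_k=f_k(S_{1,1}^m,S_{2,1}^m,\mathbf Y_1,\dots,\mathbf Y_{k-1})$ with $\mathbf Y_k=(Y_{1,k},Y_{2,k})$. Receiver $i$ outputs $\hat S_{i,1}^m=g_i(Y_{i,1}^n)$. A $(D,E,m,n)$ code is a collection $\{f_k\}_{k=1}^n,g_1,g_2$ with $\sum_{j=1}^m\mathbb E[(S_{i,j}-\hat S_{i,j})^2]\le mD$ for $i=1,2$ and $\sum_{k=1}^n\mathbb E[X_k^2]\le mE$. The energy-distortion tradeoff $E(D)$ is the minimal $E$ such that for every $\epsilon>0$ there exist $m,n$ and a $(D+\epsilon,E+\epsilon,m,n)$ code. *)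

theory Defs
  imports "HOL-Probability.Probability"
begin

text \<open>Bivariate centred Gaussian with covariance matrix
  v * [[1, r], [r, 1]] (v = sigma squared), given by its density on the plane.\<close>
definition bvn_density :: "real \<Rightarrow> real \<Rightarrow> real \<times> real \<Rightarrow> ennreal" where
  "bvn_density v r = (\<lambda>(x, y). ennreal
     (1 / (2 * pi * v * sqrt (1 - r\<^sup>2)) *
      exp (- (x\<^sup>2 - 2 * r * x * y + y\<^sup>2) / (2 * v * (1 - r\<^sup>2)))))"

definition bvn :: "real \<Rightarrow> real \<Rightarrow> (real \<times> real) measure" where
  "bvn v r = density (lborel \<Otimes>\<^sub>M lborel) (bvn_density v r)"

definition src_noise_space :: "real \<Rightarrow> real \<Rightarrow> real \<Rightarrow> real \<Rightarrow> nat \<Rightarrow> nat \<Rightarrow>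
    ((nat \<Rightarrow> real \<times> real) \<times> (nat \<Rightarrow> real \<times> real)) measure" where
  "src_noise_space vs rs vz rz m n =
     (PiM {..<m} (\<lambda>_. bvn vs rs)) \<Otimes>\<^sub>M (PiM {..<n} (\<lambda>_. bvn vz rz))"

type_synonym encoder = "nat \<Rightarrow> (nat \<Rightarrow> real \<times> real) \<Rightarrow> (nat \<Rightarrow> real \<times> real) \<Rightarrow> real"

text \<open>Feedback outputs: fb_out f s z k is the function i \<mapsto> (Y_{1,i}, Y_{2,i}) for i < k
  and (0,0) for i \<ge> k.  The encoder at time k sees the sources s and the past outputs only.\<close>
fun fb_out :: "encoder \<Rightarrow> (nat \<Rightarrow> real \<times> real) \<Rightarrow> (nat \<Rightarrow> real \<times> real) \<Rightarrow> nat \<Rightarrow> (nat \<Rightarrow> real \<times> real)" where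
  "fb_out f s z 0 = (\<lambda>_. (0, 0))"
| "fb_out f s z (Suc k) =
     (let x = f k s (fb_out f s z k)
      in (fb_out f s z k)(k := (x + fst (z k), x + snd (z k))))"

definition chan_in :: "encoder \<Rightarrow> (nat \<Rightarrow> real \<times> real) \<Rightarrow> (nat \<Rightarrow> real \<times> real) \<Rightarrow> nat \<Rightarrow> real" where
  "chan_in f s z k = f k s (fb_out f s z k)"

definition rx1 :: "encoder \<Rightarrow> nat \<Rightarrow> (nat \<Rightarrow> real \<times> real) \<Rightarrow> (nat \<Rightarrow> real \<times> real) \<Rightarrow> nat \<Rightarrow> real" where
  "rx1 f n s z = (\<lambda>k. if k < n then fst (fb_out f s z n k) else 0)"

definition rx2 :: "encoder \<Rightarrow> nat \<Rightarrow> (nat \<Rightarrow> real \<times> real) \<Rightarrow> (nat \<Rightarrow> real \<times> real) \<Rightarrow> nat \<Rightarrow> real" where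
  "rx2 f n s z = (\<lambda>k. if k < n then snd (fb_out f s z n k) else 0)"

definition is_code :: "real \<Rightarrow> real \<Rightarrow> real \<Rightarrow> real \<Rightarrow> real \<Rightarrow> real \<Rightarrow> nat \<Rightarrow> nat \<Rightarrow>
    encoder \<Rightarrow> ((nat \<Rightarrow> real) \<Rightarrow> nat \<Rightarrow> real) \<Rightarrow> ((nat \<Rightarrow> real) \<Rightarrow> nat \<Rightarrow> real) \<Rightarrow> bool" where
  "is_code vs rs vz rz D E m n f g1 g2 \<longleftrightarrow>
     (let M = src_noise_space vs rs vz rz m n;
          X = (\<lambda>k \<omega>. chan_in f (fst \<omega>) (snd \<omega>) k);
          err1 = (\<lambda>j \<omega>. (fst (fst \<omega> j) - g1 (rx1 f n (fst \<omega>) (snd \<omega>)) j)\<^sup>2);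
          err2 = (\<lambda>j \<omega>. (snd (fst \<omega> j) - g2 (rx2 f n (fst \<omega>) (snd \<omega>)) j)\<^sup>2)
      in (\<forall>k<n. integrable M (\<lambda>\<omega>. (X k \<omega>)\<^sup>2))
       \<and> (\<Sum>k<n. \<integral>\<omega>. (X k \<omega>)\<^sup>2 \<partial>M) \<le> real m * E
       \<and> (\<forall>j<m. integrable M (err1 j)) \<and> (\<Sum>j<m. \<integral>\<omega>. err1 j \<omega> \<partial>M) \<le> real m * D
       \<and> (\<forall>j<m. integrable M (err2 j)) \<and> (\<Sum>j<m. \<integral>\<omega>. err2 j \<omega> \<partial>M) \<le> real m * D)"

definition achievable :: "real \<Rightarrow> real \<Rightarrow> real \<Rightarrow> real \<Rightarrow> real \<Rightarrow> real \<Rightarrow> bool" where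
  "achievable vs rs vz rz D E \<longleftrightarrow>
     (\<forall>\<epsilon>>0. \<exists>m n f g1 g2. 0 < m \<and> 0 < n \<and> is_code vs rs vz rz (D + \<epsilon>) (E + \<epsilon>) m n f g1 g2)"

definition energy_distortion :: "real \<Rightarrow> real \<Rightarrow> real \<Rightarrow> real \<Rightarrow> real \<Rightarrow> real" where
  "energy_distortion vs rs vz rz D = Inf {E. achievable vs rs vz rz D E}"

definition D_th :: "real \<Rightarrow> real \<Rightarrow> real \<Rightarrow> real" where
  "D_th vs rs rz = vs * (2 - rz - \<bar>rs\<bar>) / (2 - rz)"

definition E_OL :: "real \<Rightarrow> real \<Rightarrow> real \<Rightarrow> real \<Rightarrow> real \<Rightarrow> real" where
  "E_OL vs rs vz rz D =
     (if D \<ge> D_th vs rs rz then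
        2 * vz / (3 - rz) * ln (vs * (1 + \<bar>rs\<bar>) / (D + (2 - rz) * (D - vs) + vs * \<bar>rs\<bar>))
      else
        2 * vz * (ln ((2 - rz - \<bar>rs\<bar>) * vs / ((2 - rz) * D))
                  + 1 / (3 - rz) * ln ((2 - rz) * (1 + \<bar>rs\<bar>) / (2 - rz - \<bar>rs\<bar>))))"

end

theory Submission
  imports Defs
begin

lemma nd_poly2:
  assumes "\<tau> > 0"
  shows "has_bochner_integral lborel (\<lambda>y. normal_density \<mu> \<tau> y * (a + b*y + c*y\<^sup>2)) (a + b*\<mu> + c*(\<tau>\<^sup>2 + \<mu>\<^sup>2))"
proof -
  have h0: "has_bochner_integral lborel (normal_density \<mu> \<tau>) 1"
    using assms by (simp add: has_bochner_integral_iff)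
  have h1: "has_bochner_integral lborel (\<lambda>y. normal_density \<mu> \<tau> y * y) \<mu>"
    using normal_moment_nz_1[OF assms] .
  have h2: "has_bochner_integral lborel (\<lambda>y. normal_density \<mu> \<tau> y * (y - \<mu>)^(2*1)) (fact (2 * 1) / ((2 / \<tau>\<^sup>2)^1 * fact 1))"
    using normal_moment_even[OF assms] .
  have h2': "has_bochner_integral lborel (\<lambda>y. normal_density \<mu> \<tau> y * (y - \<mu>)^2) (\<tau>\<^sup>2)"
  proof -
    have "fact (2 * 1) / ((2 / \<tau>\<^sup>2)^1 * fact 1) = (\<tau>\<^sup>2::real)" using assms by simp
    then show ?thesis using h2 by simp
  qed
  have "has_bochner_integral lborel (\<lambda>y. a * normal_density \<mu> \<tau> y + b * (normal_density \<mu> \<tau> y * y)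
     + c * (normal_density \<mu> \<tau> y * (y - \<mu>)^2 + (2*\<mu>) * (normal_density \<mu> \<tau> y * y) - \<mu>\<^sup>2 * normal_density \<mu> \<tau> y))
     (a * 1 + b * \<mu> + c * (\<tau>\<^sup>2 + (2*\<mu>)*\<mu> - \<mu>\<^sup>2 * 1))"
    by (intro has_bochner_integral_add has_bochner_integral_mult_right has_bochner_integral_diff h0 h1 h2')
  then show ?thesis
    by (rule has_bochner_integral_cong[THEN iffD1, rotated -1]) (auto simp: algebra_simps power2_eq_square)
qed

definition Phi :: "real \<Rightarrow> real \<Rightarrow> real \<times> real \<Rightarrow> real" where
  "Phi v r p = normal_density 0 (sqrt v) (fst p) * normal_density (r * fst p) (sqrt (v * (1-r\<^sup>2))) (snd p)"

lemma Phi_nonneg: "0 \<le> Phi v r p" by (simp add: Phi_def)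

lemma Phi_meas[measurable]: "Phi v r \<in> borel_measurable (lborel \<Otimes>\<^sub>M lborel)"
  unfolding Phi_def[abs_def] normal_density_def by measurable

lemma r2_lt: "\<bar>r\<bar> < 1 \<Longrightarrow> 0 < 1 - (r::real)\<^sup>2"
  by (simp add: abs_square_less_1)

lemma bvn_density_eq:
  assumes v: "v > 0" and r: "\<bar>r\<bar> < 1"
  shows "bvn_density v r = (\<lambda>p. ennreal (Phi v r p))"
proof
  fix p :: "real \<times> real"
  obtain x y where p: "p = (x, y)" by force
  have q: "0 < 1 - r\<^sup>2" using r2_lt[OF r] .
  have s1: "(sqrt v)\<^sup>2 = v" using v by simp
  have s2: "(sqrt (v * (1-r\<^sup>2)))\<^sup>2 = v * (1-r\<^sup>2)" using v q by simp
  have pre: "1 / sqrt (2 * pi * v) * (1 / sqrt (2 * pi * (v * (1 - r\<^sup>2)))) = 1 / (2 * pi * v * sqrt (1 - r\<^sup>2))"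
  proof -
    have "sqrt (2 * pi * v) * sqrt (2 * pi * (v * (1 - r\<^sup>2))) = sqrt ((2 * pi * v)\<^sup>2 * (1 - r\<^sup>2))"
      by (simp add: real_sqrt_mult[symmetric] power2_eq_square algebra_simps)
    also have "\<dots> = 2 * pi * v * sqrt (1 - r\<^sup>2)" using v by (simp add: real_sqrt_mult)
    finally show ?thesis by (simp add: field_simps)
  qed
  have ex: "- (x - 0)\<^sup>2 / (2 * v) + - (y - r * x)\<^sup>2 / (2 * (v * (1 - r\<^sup>2)))
      = - (x\<^sup>2 - 2 * r * x * y + y\<^sup>2) / (2 * v * (1 - r\<^sup>2))"
    using v q by (simp add: field_simps power2_eq_square)
  have "Phi v r p = 1 / sqrt (2 * pi * v) * (1 / sqrt (2 * pi * (v * (1 - r\<^sup>2))))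
      * exp (- (x - 0)\<^sup>2 / (2 * v) + - (y - r * x)\<^sup>2 / (2 * (v * (1 - r\<^sup>2))))"
    unfolding Phi_def normal_density_def p s1 s2 by (simp add: exp_diff exp_minus field_simps)
  also have "\<dots> = 1 / (2 * pi * v * sqrt (1 - r\<^sup>2)) *
      exp (- (x\<^sup>2 - 2 * r * x * y + y\<^sup>2) / (2 * v * (1 - r\<^sup>2)))"
    unfolding pre ex ..
  finally show "bvn_density v r p = ennreal (Phi v r p)"
    by (simp add: bvn_density_def p)
qed

lemma Phi_inner:
  assumes v: "v > 0" and r: "\<bar>r\<bar> < 1"
  shows "has_bochner_integral lborel (\<lambda>y. Phi v r (x, y) * (a + b * y + c * y\<^sup>2))
     (normal_density 0 (sqrt v) x * (a + b * (r * x) + c * (v * (1 - r\<^sup>2) + (r * x)\<^sup>2)))"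
proof -
  have q: "0 < 1 - r\<^sup>2" using r2_lt[OF r] .
  have t: "sqrt (v * (1 - r\<^sup>2)) > 0" using v q by simp
  have s2: "(sqrt (v * (1 - r\<^sup>2)))\<^sup>2 = v * (1 - r\<^sup>2)" using v q by simp
  from has_bochner_integral_mult_right[OF nd_poly2[OF t, of "r * x" a b c], of "normal_density 0 (sqrt v) x"]
  show ?thesis unfolding s2 by (simp add: Phi_def mult.assoc)
qed

lemma Phi_outer:
  assumes v: "v > 0"
  shows "has_bochner_integral lborel (\<lambda>x. normal_density 0 (sqrt v) x * (a + b * x + c * x\<^sup>2)) (a + c * v)"
proof -
  have t: "sqrt v > 0" using v by simp
  from nd_poly2[OF t, of 0 a b c] show ?thesis using v by simp
qed

lemma Phi_dom_int:
  assumes v: "v > 0" and r: "\<bar>r\<bar> < 1"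
  shows "integrable (lborel \<Otimes>\<^sub>M lborel) (\<lambda>p. Phi v r p * (1 + (fst p)\<^sup>2 + (snd p)\<^sup>2))"
proof (rule lborel_pair.Fubini_integrable)
  show "(\<lambda>p. Phi v r p * (1 + (fst p)\<^sup>2 + (snd p)\<^sup>2)) \<in> borel_measurable (lborel \<Otimes>\<^sub>M lborel)"
    by measurable
  have eq: "(\<lambda>x. \<integral>y. norm (Phi v r (x, y) * (1 + (fst (x, y))\<^sup>2 + (snd (x, y))\<^sup>2)) \<partial>lborel)
     = (\<lambda>x. normal_density 0 (sqrt v) x * ((1 + x\<^sup>2) + 0 * (r * x) + 1 * (v * (1 - r\<^sup>2) + (r * x)\<^sup>2)))"
  proof
    fix x
    have "(\<integral>y. norm (Phi v r (x, y) * (1 + (fst (x, y))\<^sup>2 + (snd (x, y))\<^sup>2)) \<partial>lborel)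
       = (\<integral>y. Phi v r (x, y) * ((1 + x\<^sup>2) + 0 * y + 1 * y\<^sup>2) \<partial>lborel)"
      by (rule Bochner_Integration.integral_cong[OF refl]) (simp add: Phi_nonneg abs_mult add_nonneg_nonneg)
    also have "\<dots> = normal_density 0 (sqrt v) x * ((1 + x\<^sup>2) + 0 * (r * x) + 1 * (v * (1 - r\<^sup>2) + (r * x)\<^sup>2))"
      using Phi_inner[OF v r] by (rule has_bochner_integral_integral_eq)
    finally show "(\<integral>y. norm (Phi v r (x, y) * (1 + (fst (x, y))\<^sup>2 + (snd (x, y))\<^sup>2)) \<partial>lborel)
     = normal_density 0 (sqrt v) x * ((1 + x\<^sup>2) + 0 * (r * x) + 1 * (v * (1 - r\<^sup>2) + (r * x)\<^sup>2))" .
  qed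
  have "integrable lborel (\<lambda>x. normal_density 0 (sqrt v) x * ((1 + v * (1 - r\<^sup>2)) + 0 * x + (1 + r\<^sup>2) * x\<^sup>2))"
    using Phi_outer[OF v] by (rule integrable.intros)
  then show "integrable lborel (\<lambda>x. \<integral>y. norm (Phi v r (x, y) * (1 + (fst (x, y))\<^sup>2 + (snd (x, y))\<^sup>2)) \<partial>lborel)"
  proof -
    have eq2: "(\<lambda>x. normal_density 0 (sqrt v) x * ((1 + x\<^sup>2) + 0 * (r * x) + 1 * (v * (1 - r\<^sup>2) + (r * x)\<^sup>2)))
      = (\<lambda>x. normal_density 0 (sqrt v) x * ((1 + v * (1 - r\<^sup>2)) + 0 * x + (1 + r\<^sup>2) * x\<^sup>2))"
      by (rule ext) (simp add: algebra_simps power2_eq_square)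
    show ?thesis unfolding eq eq2 by fact
  qed
  show "AE x in lborel. integrable lborel (\<lambda>y. Phi v r (x, y) * (1 + (fst (x, y))\<^sup>2 + (snd (x, y))\<^sup>2))"
  proof (intro AE_I2)
    fix x
    have "integrable lborel (\<lambda>y. Phi v r (x, y) * ((1 + x\<^sup>2) + 0 * y + 1 * y\<^sup>2))"
      using Phi_inner[OF v r] by (rule integrable.intros)
    then show "integrable lborel (\<lambda>y. Phi v r (x, y) * (1 + (fst (x, y))\<^sup>2 + (snd (x, y))\<^sup>2))"
      by simp
  qed
qed

lemma abs_le_sq1: "\<bar>x::real\<bar> \<le> 1 + x\<^sup>2"
proof -
  have "0 \<le> (\<bar>x\<bar> - 1)\<^sup>2" by simp
  then have "2 * \<bar>x\<bar> \<le> 1 + x\<^sup>2" by (simp add: power2_eq_square algebra_simps abs_mult_self_eq)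
  then show ?thesis by (smt (verit) zero_le_power2)
qed

lemma abs_mult_le_sq: "\<bar>x * (y::real)\<bar> \<le> x\<^sup>2 + y\<^sup>2"
proof -
  have "0 \<le> (\<bar>x\<bar> - \<bar>y\<bar>)\<^sup>2" by simp
  then have "2 * (\<bar>x\<bar> * \<bar>y\<bar>) \<le> x\<^sup>2 + y\<^sup>2" by (simp add: power2_eq_square algebra_simps abs_mult_self_eq)
  then show ?thesis by (simp add: abs_mult) (smt (verit) abs_ge_zero mult_nonneg_nonneg)
qed

lemma term_bound: "\<bar>t\<bar> \<le> W \<Longrightarrow> - (\<bar>c\<bar> * W) \<le> c * (t::real) \<and> c * t \<le> \<bar>c\<bar> * W"
proof -
  assume "\<bar>t\<bar> \<le> W"
  then have "\<bar>c\<bar> * \<bar>t\<bar> \<le> \<bar>c\<bar> * W" by (rule mult_left_mono) simp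
  then have "\<bar>c * t\<bar> \<le> \<bar>c\<bar> * W" by (simp add: abs_mult)
  then show ?thesis by (simp add: abs_le_iff)
qed

lemma Phi_moment:
  assumes v: "v > 0" and r: "\<bar>r\<bar> < 1"
  shows "has_bochner_integral (lborel \<Otimes>\<^sub>M lborel)
    (\<lambda>p. Phi v r p * (A + B * fst p + C * (fst p)\<^sup>2 + D * snd p + E * (fst p * snd p) + F * (snd p)\<^sup>2))
    (A + C * v + E * r * v + F * v)"
proof -
  let ?g = "\<lambda>p. Phi v r p * (A + B * fst p + C * (fst p)\<^sup>2 + D * snd p + E * (fst p * snd p) + F * (snd p)\<^sup>2)"
  let ?K = "\<bar>A\<bar> + \<bar>B\<bar> + \<bar>C\<bar> + \<bar>D\<bar> + \<bar>E\<bar> + \<bar>F\<bar>"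
  have int: "integrable (lborel \<Otimes>\<^sub>M lborel) ?g"
  proof (rule Bochner_Integration.integrable_bound)
    show "integrable (lborel \<Otimes>\<^sub>M lborel) (\<lambda>p. ?K * (Phi v r p * (1 + (fst p)\<^sup>2 + (snd p)\<^sup>2)))"
      using Phi_dom_int[OF v r] by simp
    show "?g \<in> borel_measurable (lborel \<Otimes>\<^sub>M lborel)" by measurable
    show "AE p in lborel \<Otimes>\<^sub>M lborel. norm (?g p) \<le> norm (?K * (Phi v r p * (1 + (fst p)\<^sup>2 + (snd p)\<^sup>2)))"
    proof (intro AE_I2)
      fix p :: "real \<times> real"
      obtain x y where p: "p = (x,y)" by force
      let ?W = "1 + x\<^sup>2 + y\<^sup>2"
      have x2: "0 \<le> x\<^sup>2" "0 \<le> y\<^sup>2" by simp_all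
      have b1: "\<bar>1\<bar> \<le> ?W" "\<bar>x\<bar> \<le> ?W" "\<bar>x\<^sup>2\<bar> \<le> ?W" "\<bar>y\<bar> \<le> ?W" "\<bar>x * y\<bar> \<le> ?W" "\<bar>y\<^sup>2\<bar> \<le> ?W"
        using abs_le_sq1[of x] abs_le_sq1[of y] abs_mult_le_sq[of x y] x2 by (simp_all, linarith+)
      have t1: "- (\<bar>A\<bar> * ?W) \<le> A * 1 \<and> A * 1 \<le> \<bar>A\<bar> * ?W" by (rule term_bound[OF b1(1)])
      have t2: "- (\<bar>B\<bar> * ?W) \<le> B * x \<and> B * x \<le> \<bar>B\<bar> * ?W" by (rule term_bound[OF b1(2)])
      have t3: "- (\<bar>C\<bar> * ?W) \<le> C * x\<^sup>2 \<and> C * x\<^sup>2 \<le> \<bar>C\<bar> * ?W" by (rule term_bound[OF b1(3)])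
      have t4: "- (\<bar>D\<bar> * ?W) \<le> D * y \<and> D * y \<le> \<bar>D\<bar> * ?W" by (rule term_bound[OF b1(4)])
      have t5: "- (\<bar>E\<bar> * ?W) \<le> E * (x * y) \<and> E * (x * y) \<le> \<bar>E\<bar> * ?W" by (rule term_bound[OF b1(5)])
      have t6: "- (\<bar>F\<bar> * ?W) \<le> F * y\<^sup>2 \<and> F * y\<^sup>2 \<le> \<bar>F\<bar> * ?W" by (rule term_bound[OF b1(6)])
      have "\<bar>A + B * x + C * x\<^sup>2 + D * y + E * (x * y) + F * y\<^sup>2\<bar> \<le> ?K * ?W"
        using t1 t2 t3 t4 t5 t6 unfolding abs_le_iff by (simp add: distrib_right)
      then have "Phi v r p * \<bar>A + B * x + C * x\<^sup>2 + D * y + E * (x * y) + F * y\<^sup>2\<bar> \<le> Phi v r p * (?K * ?W)"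
        by (rule mult_left_mono) (simp add: Phi_nonneg)
      moreover have "0 \<le> ?K * ?W" by simp
      ultimately show "norm (?g p) \<le> norm (?K * (Phi v r p * (1 + (fst p)\<^sup>2 + (snd p)\<^sup>2)))"
        by (simp add: p abs_mult Phi_nonneg mult_ac)
    qed
  qed
  have "integral\<^sup>L (lborel \<Otimes>\<^sub>M lborel) ?g = (\<integral>x. (\<integral>y. ?g (x,y) \<partial>lborel) \<partial>lborel)"
    using lborel_pair.integral_fst'[OF int] by simp
  also have "\<dots> = (\<integral>x. normal_density 0 (sqrt v) x * ((A + F * (v * (1 - r\<^sup>2)))
       + (B + D * r) * x + (C + E * r + F * r\<^sup>2) * x\<^sup>2) \<partial>lborel)"
  proof (rule Bochner_Integration.integral_cong[OF refl])
    fix x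
    have "(\<integral>y. ?g (x,y) \<partial>lborel) = (\<integral>y. Phi v r (x, y) * ((A + B * x + C * x\<^sup>2) + (D + E * x) * y + F * y\<^sup>2) \<partial>lborel)"
      by (rule Bochner_Integration.integral_cong[OF refl]) (simp add: algebra_simps)
    also have "\<dots> = normal_density 0 (sqrt v) x * ((A + B * x + C * x\<^sup>2) + (D + E * x) * (r * x) + F * (v * (1 - r\<^sup>2) + (r * x)\<^sup>2))"
      using Phi_inner[OF v r] by (rule has_bochner_integral_integral_eq)
    also have "\<dots> = normal_density 0 (sqrt v) x * ((A + F * (v * (1 - r\<^sup>2)))
       + (B + D * r) * x + (C + E * r + F * r\<^sup>2) * x\<^sup>2)"
      by (simp add: algebra_simps power2_eq_square)
    finally show "(\<integral>y. ?g (x,y) \<partial>lborel) = normal_density 0 (sqrt v) x * ((A + F * (v * (1 - r\<^sup>2)))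
       + (B + D * r) * x + (C + E * r + F * r\<^sup>2) * x\<^sup>2)" .
  qed
  also have "\<dots> = (A + F * (v * (1 - r\<^sup>2))) + (C + E * r + F * r\<^sup>2) * v"
    using Phi_outer[OF v] by (rule has_bochner_integral_integral_eq)
  also have "\<dots> = A + C * v + E * r * v + F * v" by (simp add: algebra_simps)
  finally show ?thesis using int by (simp add: has_bochner_integral_iff)
qed

lemma sets_bvn[measurable_cong, simp]: "sets (bvn v r) = sets (lborel \<Otimes>\<^sub>M lborel)"
  by (simp add: bvn_def)

lemma space_bvn[simp]: "space (bvn v r) = UNIV"
  by (simp add: bvn_def space_pair_measure)

lemma bvn_eq:
  assumes v: "v > 0" and r: "\<bar>r\<bar> < 1"
  shows "bvn v r = density (lborel \<Otimes>\<^sub>M lborel) (\<lambda>p. ennreal (Phi v r p))"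
  unfolding bvn_def bvn_density_eq[OF v r] ..

lemma bvn_moment:
  assumes v: "v > 0" and r: "\<bar>r\<bar> < 1"
  shows "has_bochner_integral (bvn v r)
    (\<lambda>p. A + B * fst p + C * (fst p)\<^sup>2 + D * snd p + E * (fst p * snd p) + F * (snd p)\<^sup>2)
    (A + C * v + E * r * v + F * v)"
  unfolding bvn_eq[OF v r]
  by (rule has_bochner_integral_density) (auto simp: Phi_nonneg intro: Phi_moment[OF v r])

lemma prob_space_bvn:
  assumes v: "v > 0" and r: "\<bar>r\<bar> < 1"
  shows "prob_space (bvn v r)"
proof (rule prob_spaceI)
  have h: "has_bochner_integral (lborel \<Otimes>\<^sub>M lborel) (Phi v r) 1"
    using Phi_moment[OF v r, of 1 0 0 0 0 0] by simp
  have "emeasure (bvn v r) (space (bvn v r)) = (\<integral>\<^sup>+ p. ennreal (Phi v r p) \<partial>(lborel \<Otimes>\<^sub>M lborel))"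
  proof -
    have "UNIV \<in> sets (lborel \<Otimes>\<^sub>M lborel :: (real \<times> real) measure)"
      using sets.top[of "lborel \<Otimes>\<^sub>M lborel :: (real \<times> real) measure"] by (simp add: space_pair_measure)
    then show ?thesis unfolding bvn_eq[OF v r]
      by (subst emeasure_density) (auto intro!: nn_integral_cong simp: space_pair_measure)
  qed
  also have "\<dots> = ennreal (integral\<^sup>L (lborel \<Otimes>\<^sub>M lborel) (Phi v r))"
    using h by (intro nn_integral_eq_integral) (auto simp: Phi_nonneg has_bochner_integral_iff)
  also have "\<dots> = 1" using h by (simp add: has_bochner_integral_iff)
  finally show "emeasure (bvn v r) (space (bvn v r)) = 1" .
qed

definition sel :: "nat \<Rightarrow> real \<times> real \<Rightarrow> real" where
  "sel j = (if even j then fst else snd)"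

lemma sel_meas[measurable]: "sel j \<in> borel_measurable (lborel \<Otimes>\<^sub>M lborel)"
  unfolding sel_def by auto

lemma bvn_sel_mean:
  assumes v: "v > 0" and r: "\<bar>r\<bar> < 1"
  shows "has_bochner_integral (bvn v r) (sel a) 0"
proof (cases "even a")
  case True
  then show ?thesis using bvn_moment[OF v r, of 0 1 0 0 0 0] by (simp add: sel_def)
next
  case False
  then show ?thesis using bvn_moment[OF v r, of 0 0 0 1 0 0] by (simp add: sel_def)
qed

lemma bvn_sel_mom:
  assumes v: "v > 0" and r: "\<bar>r\<bar> < 1"
  shows "has_bochner_integral (bvn v r) (\<lambda>p. sel a p * sel b p) (v * (if even a = even b then 1 else r))"
proof -
  have 1: "has_bochner_integral (bvn v r) (\<lambda>p. fst p * fst p) v"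
    using bvn_moment[OF v r, of 0 0 1 0 0 0] by (simp add: power2_eq_square)
  have 2: "has_bochner_integral (bvn v r) (\<lambda>p. snd p * snd p) v"
    using bvn_moment[OF v r, of 0 0 0 0 0 1] by (simp add: power2_eq_square)
  have 3: "has_bochner_integral (bvn v r) (\<lambda>p. fst p * snd p) (v * r)"
    using bvn_moment[OF v r, of 0 0 0 0 1 0] by (simp add: mult.commute)
  have 4: "has_bochner_integral (bvn v r) (\<lambda>p. snd p * fst p) (v * r)"
    using bvn_moment[OF v r, of 0 0 0 0 1 0] by (simp add: mult.commute)
  show ?thesis using 1 2 3 4 by (cases "even a"; cases "even b") (auto simp: sel_def)
qed

lemma pair_prob_mult:
  assumes "prob_space M1" "prob_space M2"
    and f: "has_bochner_integral M1 f a" and g: "has_bochner_integral M2 g b"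
  shows "has_bochner_integral (M1 \<Otimes>\<^sub>M M2) (\<lambda>\<omega>. f (fst \<omega>) * g (snd \<omega>)) (a * (b::real))"
proof -
  interpret M1: prob_space M1 by fact
  interpret M2: prob_space M2 by fact
  interpret P: pair_sigma_finite M1 M2 ..
  have fi: "integrable M1 f" and gi: "integrable M2 g" and fa: "integral\<^sup>L M1 f = a" and gb: "integral\<^sup>L M2 g = b"
    using f g by (auto simp: has_bochner_integral_iff)
  have [measurable]: "f \<in> borel_measurable M1" "g \<in> borel_measurable M2" using fi gi by auto
  have int: "integrable (M1 \<Otimes>\<^sub>M M2) (\<lambda>\<omega>. f (fst \<omega>) * g (snd \<omega>))"
  proof (rule P.Fubini_integrable)
    show "(\<lambda>\<omega>. f (fst \<omega>) * g (snd \<omega>)) \<in> borel_measurable (M1 \<Otimes>\<^sub>M M2)" by measurable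
    have "(\<lambda>x. \<integral>y. norm (f (fst (x, y)) * g (snd (x, y))) \<partial>M2) = (\<lambda>x. norm (f x) * (\<integral>y. norm (g y) \<partial>M2))"
      by (simp add: abs_mult integral_mult_right_zero)
    moreover have "integrable M1 (\<lambda>x. norm (f x) * (\<integral>y. norm (g y) \<partial>M2))"
      using fi by auto
    ultimately show "integrable M1 (\<lambda>x. \<integral>y. norm (f (fst (x, y)) * g (snd (x, y))) \<partial>M2)" by simp
    show "AE x in M1. integrable M2 (\<lambda>y. f (fst (x, y)) * g (snd (x, y)))"
      using gi by auto
  qed
  have "integral\<^sup>L (M1 \<Otimes>\<^sub>M M2) (\<lambda>\<omega>. f (fst \<omega>) * g (snd \<omega>)) = (\<integral>x. (\<integral>y. f x * g y \<partial>M2) \<partial>M1)"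
    using P.integral_fst'[OF int] by simp
  also have "\<dots> = (\<integral>x. f x * b \<partial>M1)" using gb by simp
  also have "\<dots> = a * b" using fa by simp
  finally show ?thesis using int by (simp add: has_bochner_integral_iff)
qed

lemma PiM_two:
  assumes N: "prob_space N" and I: "finite I" "i \<in> I" "j \<in> I" "i \<noteq> j"
    and u: "has_bochner_integral N u a" and v: "has_bochner_integral N w b"
  shows "has_bochner_integral (PiM I (\<lambda>_. N)) (\<lambda>x. u (x i) * w (x j)) (a * (b::real))"
proof -
  interpret N: prob_space N by fact
  interpret P: product_prob_space "\<lambda>_. N" I ..
  define f where "f k = (if k = i then u else if k = j then w else (\<lambda>_. 1::real))" for k
  have fi: "\<And>k. k \<in> I \<Longrightarrow> integrable N (f k)" using u v by (auto simp: f_def has_bochner_integral_iff)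
  have eq: "(\<Prod>k\<in>I. f k (x k)) = u (x i) * w (x j)" for x
  proof -
    have "(\<Prod>k\<in>I. f k (x k)) = f i (x i) * (\<Prod>k\<in>I - {i}. f k (x k))"
      using I by (simp add: prod.remove)
    also have "(\<Prod>k\<in>I - {i}. f k (x k)) = f j (x j) * (\<Prod>k\<in>I - {i} - {j}. f k (x k))"
      using I by (intro prod.remove) auto
    also have "(\<Prod>k\<in>I - {i} - {j}. f k (x k)) = 1"
      by (intro prod.neutral) (auto simp: f_def)
    finally show ?thesis using I by (simp add: f_def)
  qed
  have "integrable (PiM I (\<lambda>_. N)) (\<lambda>x. \<Prod>k\<in>I. f k (x k))"
    using P.product_integrable_prod[OF I(1) fi] .
  moreover have "integral\<^sup>L (PiM I (\<lambda>_. N)) (\<lambda>x. \<Prod>k\<in>I. f k (x k)) = (\<Prod>k\<in>I. integral\<^sup>L N (f k))"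
    using P.product_integral_prod[OF I(1) fi] .
  moreover have "(\<Prod>k\<in>I. integral\<^sup>L N (f k)) = a * b"
  proof -
    have "(\<Prod>k\<in>I. integral\<^sup>L N (f k)) = integral\<^sup>L N (f i) * (\<Prod>k\<in>I - {i}. integral\<^sup>L N (f k))"
      using I by (simp add: prod.remove)
    also have "(\<Prod>k\<in>I - {i}. integral\<^sup>L N (f k)) = integral\<^sup>L N (f j) * (\<Prod>k\<in>I - {i} - {j}. integral\<^sup>L N (f k))"
      using I by (intro prod.remove) auto
    also have "(\<Prod>k\<in>I - {i} - {j}. integral\<^sup>L N (f k)) = 1"
      by (intro prod.neutral) (auto simp: f_def N.prob_space)
    finally show ?thesis using I u v by (simp add: f_def has_bochner_integral_iff)
  qed
  ultimately show ?thesis by (simp add: eq has_bochner_integral_iff)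
qed

lemma PiM_one:
  assumes N: "prob_space N" and I: "finite I" "i \<in> I"
    and u: "has_bochner_integral N u a"
  shows "has_bochner_integral (PiM I (\<lambda>_. N)) (\<lambda>x. u (x i)) (a::real)"
proof -
  interpret N: prob_space N by fact
  interpret P: product_prob_space "\<lambda>_. N" I ..
  define f where "f k = (if k = i then u else (\<lambda>_. 1::real))" for k
  have fi: "\<And>k. k \<in> I \<Longrightarrow> integrable N (f k)" using u by (auto simp: f_def has_bochner_integral_iff)
  have eq: "(\<Prod>k\<in>I. f k (x k)) = u (x i)" for x
  proof -
    have "(\<Prod>k\<in>I. f k (x k)) = f i (x i) * (\<Prod>k\<in>I - {i}. f k (x k))"
      using I by (simp add: prod.remove)
    also have "(\<Prod>k\<in>I - {i}. f k (x k)) = 1"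
      by (intro prod.neutral) (auto simp: f_def)
    finally show ?thesis using I by (simp add: f_def)
  qed
  have "integrable (PiM I (\<lambda>_. N)) (\<lambda>x. \<Prod>k\<in>I. f k (x k))"
    using P.product_integrable_prod[OF I(1) fi] .
  moreover have "integral\<^sup>L (PiM I (\<lambda>_. N)) (\<lambda>x. \<Prod>k\<in>I. f k (x k)) = (\<Prod>k\<in>I. integral\<^sup>L N (f k))"
    using P.product_integral_prod[OF I(1) fi] .
  moreover have "(\<Prod>k\<in>I. integral\<^sup>L N (f k)) = a"
  proof -
    have "(\<Prod>k\<in>I. integral\<^sup>L N (f k)) = integral\<^sup>L N (f i) * (\<Prod>k\<in>I - {i}. integral\<^sup>L N (f k))"
      using I by (simp add: prod.remove)
    also have "(\<Prod>k\<in>I - {i}. integral\<^sup>L N (f k)) = 1"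
      by (intro prod.neutral) (auto simp: f_def N.prob_space)
    finally show ?thesis using I u by (simp add: f_def has_bochner_integral_iff)
  qed
  ultimately show ?thesis by (simp add: eq has_bochner_integral_iff)
qed

lemma hbi_eq: "has_bochner_integral M f a \<Longrightarrow> (\<And>x. g x = f x) \<Longrightarrow> b = a \<Longrightarrow> has_bochner_integral M g b"
proof -
  assume "has_bochner_integral M f a" "\<And>x. g x = f x" "b = a"
  moreover have "g = f" using \<open>\<And>x. g x = f x\<close> by (rule ext)
  ultimately show ?thesis by simp
qed

lemma hbi_one: "prob_space M \<Longrightarrow> has_bochner_integral M (\<lambda>_. 1::real) 1"
proof -
  assume "prob_space M"
  then interpret prob_space M .
  show ?thesis by (simp add: has_bochner_integral_iff prob_space)
qed

definition Wc :: "nat \<Rightarrow> (nat \<Rightarrow> real \<times> real) \<times> (nat \<Rightarrow> real \<times> real) \<Rightarrow> real" where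
  "Wc j \<omega> = (if j < 2 then sel j (fst \<omega> 0) else sel j (snd \<omega> ((j - 2) div 2)))"

definition Cm :: "real \<Rightarrow> real \<Rightarrow> real \<Rightarrow> real \<Rightarrow> nat \<Rightarrow> nat \<Rightarrow> real" where
  "Cm vs rs vz rz j l = (if j < 2 \<and> l < 2 then vs * (if even j = even l then 1 else rs)
     else if 2 \<le> j \<and> 2 \<le> l \<and> (j - 2) div 2 = (l - 2) div 2 then vz * (if even j = even l then 1 else rz) else 0)"

lemma EW:
  assumes vs: "vs > 0" and rs: "\<bar>rs\<bar> < 1" and vz: "vz > 0" and rz: "\<bar>rz\<bar> < 1"
    and j: "j < 2 + 2 * n" and l: "l < 2 + 2 * n"
  shows "has_bochner_integral (src_noise_space vs rs vz rz 1 n) (\<lambda>\<omega>. Wc j \<omega> * Wc l \<omega>) (Cm vs rs vz rz j l)"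
proof -
  let ?N1 = "bvn vs rs" and ?N2 = "bvn vz rz"
  let ?M1 = "PiM {..<1::nat} (\<lambda>_. ?N1)" and ?M2 = "PiM {..<n} (\<lambda>_. ?N2)"
  have P1: "prob_space ?N1" using prob_space_bvn[OF vs rs] .
  have P2: "prob_space ?N2" using prob_space_bvn[OF vz rz] .
  have Q1: "prob_space ?M1" by (rule prob_space_PiM) (rule P1)
  have Q2: "prob_space ?M2" by (rule prob_space_PiM) (rule P2)
  have M: "src_noise_space vs rs vz rz 1 n = ?M1 \<Otimes>\<^sub>M ?M2" by (simp add: src_noise_space_def)
  have blk: "\<And>k. 2 \<le> k \<Longrightarrow> k < 2 + 2 * n \<Longrightarrow> (k - 2) div 2 \<in> {..<n}" by auto
  show ?thesis unfolding M
  proof (cases "j < 2")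
    case jt: True
    show "has_bochner_integral (?M1 \<Otimes>\<^sub>M ?M2) (\<lambda>\<omega>. Wc j \<omega> * Wc l \<omega>) (Cm vs rs vz rz j l)"
    proof (cases "l < 2")
      case lt: True
      have "has_bochner_integral ?M1 (\<lambda>s. sel j (s 0) * sel l (s 0)) (vs * (if even j = even l then 1 else rs))"
        by (rule PiM_one[OF P1 _ _ bvn_sel_mom[OF vs rs]]) auto
      from pair_prob_mult[OF Q1 Q2 this hbi_one[OF Q2]] show ?thesis
        by (rule hbi_eq) (auto simp: Wc_def Cm_def jt lt)
    next
      case lf: False
      have a: "has_bochner_integral ?M1 (\<lambda>s. sel j (s 0)) 0"
        by (rule PiM_one[OF P1, of _ 0 "sel j"]) (auto intro: bvn_sel_mean[OF vs rs])
      have b: "has_bochner_integral ?M2 (\<lambda>z. sel l (z ((l - 2) div 2))) 0"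
        by (rule PiM_one[OF P2, of _ "(l - 2) div 2" "sel l"]) (use blk[of l] l lf in \<open>auto intro: bvn_sel_mean[OF vz rz]\<close>)
      from pair_prob_mult[OF Q1 Q2 a b] show ?thesis
        by (rule hbi_eq) (use jt lf in \<open>auto simp: Wc_def Cm_def\<close>)
    qed
  next
    case jf: False
    show "has_bochner_integral (?M1 \<Otimes>\<^sub>M ?M2) (\<lambda>\<omega>. Wc j \<omega> * Wc l \<omega>) (Cm vs rs vz rz j l)"
    proof (cases "l < 2")
      case lt: True
      have a: "has_bochner_integral ?M1 (\<lambda>s. sel l (s 0)) 0"
        by (rule PiM_one[OF P1, of _ 0 "sel l"]) (auto intro: bvn_sel_mean[OF vs rs])
      have b: "has_bochner_integral ?M2 (\<lambda>z. sel j (z ((j - 2) div 2))) 0"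
        by (rule PiM_one[OF P2, of _ "(j - 2) div 2" "sel j"]) (use blk[of j] j jf in \<open>auto intro: bvn_sel_mean[OF vz rz]\<close>)
      from pair_prob_mult[OF Q1 Q2 a b] show ?thesis
        by (rule hbi_eq) (use jf lt in \<open>auto simp: Wc_def Cm_def\<close>)
    next
      case lf: False
      show ?thesis
      proof (cases "(j - 2) div 2 = (l - 2) div 2")
        case eq: True
        have "has_bochner_integral ?M2 (\<lambda>z. sel j (z ((j - 2) div 2)) * sel l (z ((j - 2) div 2))) (vz * (if even j = even l then 1 else rz))"
          by (rule PiM_one[OF P2 _ _ bvn_sel_mom[OF vz rz]]) (use blk[of j] j jf in auto)
        moreover have "Cm vs rs vz rz j l = 1 * (vz * (if even j = even l then 1 else rz))"
          using jf lf eq unfolding Cm_def by auto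
        ultimately show ?thesis using pair_prob_mult[OF Q1 Q2 hbi_one[OF Q1]]
          by (intro hbi_eq[OF pair_prob_mult[OF Q1 Q2 hbi_one[OF Q1]]]) (auto simp: Wc_def jf lf eq)
      next
        case ne: False
        have "has_bochner_integral ?M2 (\<lambda>z. sel j (z ((j - 2) div 2)) * sel l (z ((l - 2) div 2))) (0 * 0)"
          by (rule PiM_two[OF P2]) (use blk[of j] blk[of l] j jf l lf ne in \<open>auto intro: bvn_sel_mean[OF vz rz]\<close>)
        from pair_prob_mult[OF Q1 Q2 hbi_one[OF Q1] this] show ?thesis
          by (rule hbi_eq) (auto simp: Wc_def Cm_def jf lf ne)
      qed
    qed
  qed
qed

locale sch =
  fixes vs rs vz rz P :: real and n :: nat
  assumes vs: "vs > 0" and rs: "\<bar>rs\<bar> < 1" and vz: "vz > 0" and rz: "\<bar>rz\<bar> < 1"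
begin

abbreviation "Mo \<equiv> src_noise_space vs rs vz rz 1 n"

definition Nn :: nat where "Nn = 2 + 2 * n"

definition lin :: "(nat \<Rightarrow> real) \<Rightarrow> (nat \<Rightarrow> real \<times> real) \<times> (nat \<Rightarrow> real \<times> real) \<Rightarrow> real" where
  "lin a \<omega> = (\<Sum>j<Nn. a j * Wc j \<omega>)"

definition Bf :: "(nat \<Rightarrow> real) \<Rightarrow> (nat \<Rightarrow> real) \<Rightarrow> real" where
  "Bf a b = (\<Sum>j<Nn. \<Sum>l<Nn. a j * b l * Cm vs rs vz rz j l)"

lemma lin_prod: "has_bochner_integral Mo (\<lambda>\<omega>. lin a \<omega> * lin b \<omega>) (Bf a b)"
proof -
  have "has_bochner_integral Mo (\<lambda>\<omega>. \<Sum>j<Nn. \<Sum>l<Nn. a j * b l * (Wc j \<omega> * Wc l \<omega>)) (Bf a b)"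
    unfolding Bf_def
    by (intro has_bochner_integral_sum has_bochner_integral_mult_right EW[OF vs rs vz rz]) (auto simp: Nn_def)
  then show ?thesis
    by (rule hbi_eq) (simp_all add: lin_def sum_product mult_ac)
qed

lemma Cm_sym: "Cm vs rs vz rz j l = Cm vs rs vz rz l j"
  unfolding Cm_def by auto

lemma Bf_add1: "Bf (\<lambda>j. a j + b j) c = Bf a c + Bf b c"
  unfolding Bf_def by (simp add: algebra_simps sum.distrib)

lemma Bf_scale1: "Bf (\<lambda>j. k * a j) c = k * Bf a c"
  unfolding Bf_def by (simp add: sum_distrib_left mult_ac)

lemma Bf_sym: "Bf a b = Bf b a"
  unfolding Bf_def by (subst sum.swap) (simp add: Cm_sym mult_ac)

lemma Bf_add2: "Bf c (\<lambda>j. a j + b j) = Bf c a + Bf c b"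
  by (simp add: Bf_sym[of c] Bf_add1)

lemma Bf_scale2: "Bf c (\<lambda>j. k * a j) = k * Bf c a"
  by (simp add: Bf_sym[of c] Bf_scale1)

lemma Bf_minus1: "Bf (\<lambda>j. a j - b j) c = Bf a c - Bf b c"
  using Bf_add1[of a "\<lambda>j. (-1) * b j" c] Bf_scale1[of "-1" b c] by simp

lemma Bf_minus2: "Bf c (\<lambda>j. a j - b j) = Bf c a - Bf c b"
  by (simp add: Bf_sym[of c] Bf_minus1)

definition unit :: "nat \<Rightarrow> nat \<Rightarrow> real" where
  "unit j0 = (\<lambda>j. if j = j0 then 1 else 0)"

lemma Bf_unit1: "j0 < Nn \<Longrightarrow> Bf (unit j0) b = (\<Sum>l<Nn. b l * Cm vs rs vz rz j0 l)"
proof -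
  assume j0: "j0 < Nn"
  have "Bf (unit j0) b = (\<Sum>j<Nn. (if j = j0 then (\<Sum>l<Nn. b l * Cm vs rs vz rz j0 l) else 0))"
    unfolding Bf_def unit_def by (intro sum.cong refl) auto
  also have "\<dots> = (\<Sum>l<Nn. b l * Cm vs rs vz rz j0 l)" using j0 by (simp add: sum.delta)
  finally show ?thesis .
qed

lemma Bf_units:
  assumes "j0 < Nn" "l0 < Nn"
  shows "Bf (unit j0) (unit l0) = Cm vs rs vz rz j0 l0"
proof -
  have "Bf (unit j0) (unit l0) = (\<Sum>l<Nn. unit l0 l * Cm vs rs vz rz j0 l)"
    by (rule Bf_unit1[OF assms(1)])
  also have "\<dots> = (\<Sum>l<Nn. (if l = l0 then Cm vs rs vz rz j0 l0 else 0))"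
    by (intro sum.cong refl) (auto simp: unit_def)
  also have "\<dots> = Cm vs rs vz rz j0 l0" using assms by (simp add: sum.delta)
  finally show ?thesis .
qed

definition supp_lt :: "(nat \<Rightarrow> real) \<Rightarrow> nat \<Rightarrow> bool" where
  "supp_lt a m \<longleftrightarrow> (\<forall>j. m \<le> j \<longrightarrow> a j = 0)"

lemma Bf_noise_zero:
  assumes "supp_lt a (2 + 2 * k)" "k < n" "u = 2 + 2 * k \<or> u = 3 + 2 * k"
  shows "Bf a (unit u) = 0"
proof -
  have "Bf a (unit u) = Bf (unit u) a" by (rule Bf_sym)
  also have "\<dots> = (\<Sum>l<Nn. a l * Cm vs rs vz rz u l)"
    using assms by (intro Bf_unit1) (auto simp: Nn_def)
  also have "\<dots> = 0"
  proof (intro sum.neutral ballI)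
    fix l assume "l \<in> {..<Nn}"
    show "a l * Cm vs rs vz rz u l = 0"
    proof (cases "2 + 2 * k \<le> l")
      case True then show ?thesis using assms(1) by (simp add: supp_lt_def)
    next
      case False
      then have "l < 2 \<or> (l - 2) div 2 < k" by auto
      moreover have "(u - 2) div 2 = k" using assms(3) by auto
      ultimately have "Cm vs rs vz rz u l = 0" using assms(3) unfolding Cm_def by auto
      then show ?thesis by simp
    qed
  qed
  finally show ?thesis .
qed

end

lemma fb_stable: "i < k \<Longrightarrow> fb_out f s z k i = fb_out f s z (Suc i) i"
proof (induction k)
  case 0 then show ?case by simp
next
  case (Suc k)
  show ?case
  proof (cases "i = k")
    case True then show ?thesis by simp
  next
    case False
    then have "i < k" using Suc.prems by simp
    then show ?thesis using Suc.IH False by (simp add: Let_def)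
  qed
qed

lemma fb_self: "fb_out f s z (Suc i) i = (f i s (fb_out f s z i) + fst (z i), f i s (fb_out f s z i) + snd (z i))"
  by (simp add: Let_def)

context sch
begin

definition gam :: real where "gam = 2 - (P + vz * rz) / (P + vz)"

fun st :: "nat \<Rightarrow> real \<times> real" where
  "st 0 = (vs, vs * rs)"
| "st (Suc k) = (let a = fst (st k); c = snd (st k); q = P * (a + \<bar>c\<bar>) / (2 * (P + vz))
     in (a - q, c - (if c \<ge> 0 then 1 else -1) * q * gam))"

definition al :: "nat \<Rightarrow> real" where "al k = fst (st k)"
definition cc :: "nat \<Rightarrow> real" where "cc k = snd (st k)"
definition sg :: "nat \<Rightarrow> real" where "sg k = (if cc k \<ge> 0 then 1 else -1)"
definition Gn :: "nat \<Rightarrow> real" where "Gn k = sqrt (P / (2 * (al k + \<bar>cc k\<bar>)))"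
definition kap :: "nat \<Rightarrow> real" where "kap k = Gn k * (al k + \<bar>cc k\<bar>) / (P + vz)"

lemma st_Suc: "al (Suc k) = al k - P * (al k + \<bar>cc k\<bar>) / (2 * (P + vz))"
  "cc (Suc k) = cc k - sg k * (P * (al k + \<bar>cc k\<bar>) / (2 * (P + vz))) * gam"
  by (simp_all add: al_def cc_def sg_def Let_def)

lemma st_0: "al 0 = vs" "cc 0 = vs * rs" by (simp_all add: al_def cc_def)

definition enc :: encoder where
  "enc k s y = Gn k * ((fst (s 0) - (\<Sum>i<k. kap i * fst (y i)))
      + sg k * (snd (s 0) - (\<Sum>i<k. sg i * kap i * snd (y i))))"

lemma enc_eq: "enc k s y = Gn k * ((fst (s 0) - (\<Sum>i<k. kap i * fst (y i)))
      + sg k * (snd (s 0) - (\<Sum>i<k. sg i * kap i * snd (y i))))"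
  by (simp add: enc_def)

definition dec1 :: "(nat \<Rightarrow> real) \<Rightarrow> nat \<Rightarrow> real" where
  "dec1 y j = (\<Sum>i<n. kap i * y i)"

definition dec2 :: "(nat \<Rightarrow> real) \<Rightarrow> nat \<Rightarrow> real" where
  "dec2 y j = (\<Sum>i<n. sg i * kap i * y i)"

fun ev :: "nat \<Rightarrow> (nat \<Rightarrow> real) \<times> (nat \<Rightarrow> real)" where
  "ev 0 = (unit 0, unit 1)"
| "ev (Suc k) = (let A = fst (ev k); B = snd (ev k); X = (\<lambda>j. Gn k * (A j + sg k * B j))
     in (\<lambda>j. A j - kap k * (X j + unit (2 + 2 * k) j), \<lambda>j. B j - sg k * kap k * (X j + unit (3 + 2 * k) j)))"

definition e1 :: "nat \<Rightarrow> nat \<Rightarrow> real" where "e1 k = fst (ev k)"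
definition e2 :: "nat \<Rightarrow> nat \<Rightarrow> real" where "e2 k = snd (ev k)"
definition xv :: "nat \<Rightarrow> nat \<Rightarrow> real" where "xv k = (\<lambda>j. Gn k * (e1 k j + sg k * e2 k j))"

lemma ev_Suc: "e1 (Suc k) = (\<lambda>j. e1 k j - kap k * (xv k j + unit (2 + 2 * k) j))"
  "e2 (Suc k) = (\<lambda>j. e2 k j - sg k * kap k * (xv k j + unit (3 + 2 * k) j))"
  by (simp_all add: e1_def e2_def xv_def Let_def)

lemma ev_0: "e1 0 = unit 0" "e2 0 = unit 1" by (simp_all add: e1_def e2_def)

lemma lin_add: "lin (\<lambda>j. a j + b j) \<omega> = lin a \<omega> + lin b \<omega>"
  unfolding lin_def by (simp add: algebra_simps sum.distrib)
lemma lin_diff: "lin (\<lambda>j. a j - b j) \<omega> = lin a \<omega> - lin b \<omega>"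
  unfolding lin_def by (simp add: algebra_simps sum_subtractf)
lemma lin_scale: "lin (\<lambda>j. c * a j) \<omega> = c * lin a \<omega>"
  unfolding lin_def by (simp add: sum_distrib_left mult_ac)
lemma lin_unit: "j0 < Nn \<Longrightarrow> lin (unit j0) \<omega> = Wc j0 \<omega>"
  unfolding lin_def unit_def by (simp add: if_distrib[of "\<lambda>x. x * _"] sum.delta cong: if_cong)

lemma Wc_vals: "Wc 0 (s, z) = fst (s 0)" "Wc 1 (s, z) = snd (s 0)"
  "Wc (2 + 2 * i) (s, z) = fst (z i)" "Wc (3 + 2 * i) (s, z) = snd (z i)"
  by (simp_all add: Wc_def sel_def)

lemma xv_lin: "lin (xv k) \<omega> = Gn k * (lin (e1 k) \<omega> + sg k * lin (e2 k) \<omega>)"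
  unfolding xv_def by (simp add: lin_scale lin_add)

lemma encv_gen:
  assumes "lin (e1 k) (s, z) = fst (s 0) - (\<Sum>i<k. kap i * fst (fb_out enc s z (Suc i) i))"
    and "lin (e2 k) (s, z) = snd (s 0) - (\<Sum>i<k. sg i * kap i * snd (fb_out enc s z (Suc i) i))"
  shows "enc k s (fb_out enc s z k) = lin (xv k) (s, z)"
proof -
  have "(\<Sum>i<k. kap i * fst (fb_out enc s z k i)) = (\<Sum>i<k. kap i * fst (fb_out enc s z (Suc i) i))"
    by (intro sum.cong refl, subst fb_stable, auto simp del: fb_out.simps)
  moreover have "(\<Sum>i<k. sg i * kap i * snd (fb_out enc s z k i)) = (\<Sum>i<k. sg i * kap i * snd (fb_out enc s z (Suc i) i))"
    by (intro sum.cong refl, subst fb_stable, auto simp del: fb_out.simps)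
  ultimately show ?thesis using assms by (simp add: enc_eq xv_lin del: fb_out.simps)
qed

lemma corr:
  "k \<le> n \<Longrightarrow> lin (e1 k) (s, z) = fst (s 0) - (\<Sum>i<k. kap i * fst (fb_out enc s z (Suc i) i))
     \<and> lin (e2 k) (s, z) = snd (s 0) - (\<Sum>i<k. sg i * kap i * snd (fb_out enc s z (Suc i) i))"
proof (induction k)
  case 0
  have "0 < Nn" "1 < Nn" by (simp_all add: Nn_def)
  then show ?case by (simp add: ev_0 lin_unit Wc_vals Wc_def sel_def)
next
  case (Suc k)
  then have k: "k < n" by simp
  note IH = Suc.IH[OF less_imp_le[OF k]]
  have nn: "2 + 2 * k < Nn" "3 + 2 * k < Nn" using k by (simp_all add: Nn_def)
  have encv: "enc k s (fb_out enc s z k) = lin (xv k) (s, z)"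
    using IH by (intro encv_gen) auto
  have y: "fb_out enc s z (Suc k) k = (lin (xv k) (s, z) + fst (z k), lin (xv k) (s, z) + snd (z k))"
    using fb_self[of enc s z k] encv by (simp del: fb_out.simps)
  have a1: "lin (e1 (Suc k)) (s, z) = lin (e1 k) (s, z) - kap k * (lin (xv k) (s, z) + fst (z k))"
    unfolding ev_Suc lin_diff lin_scale lin_add lin_unit[OF nn(1)] Wc_vals ..
  have a2: "lin (e2 (Suc k)) (s, z) = lin (e2 k) (s, z) - sg k * kap k * (lin (xv k) (s, z) + snd (z k))"
    unfolding ev_Suc lin_diff lin_scale lin_add lin_unit[OF nn(2)] Wc_vals ..
  have y1: "lin (xv k) (s, z) + fst (z k) = fst (fb_out enc s z (Suc k) k)" using y by (simp del: fb_out.simps)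
  have y2: "lin (xv k) (s, z) + snd (z k) = snd (fb_out enc s z (Suc k) k)" using y by (simp del: fb_out.simps)
  show ?case
    unfolding a1 a2 y1 y2 sum.lessThan_Suc using IH by (simp del: fb_out.simps)
qed

lemma chan_lin: "k < n \<Longrightarrow> chan_in enc s z k = lin (xv k) (s, z)"
proof -
  assume k: "k < n"
  note IH = corr[OF less_imp_le[OF k], of s z]
  have "(\<Sum>i<k. kap i * fst (fb_out enc s z k i)) = (\<Sum>i<k. kap i * fst (fb_out enc s z (Suc i) i))"
    by (intro sum.cong refl, subst fb_stable, auto simp del: fb_out.simps)
  moreover have "(\<Sum>i<k. sg i * kap i * snd (fb_out enc s z k i)) = (\<Sum>i<k. sg i * kap i * snd (fb_out enc s z (Suc i) i))"
    by (intro sum.cong refl, subst fb_stable, auto simp del: fb_out.simps)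
  ultimately show ?thesis using IH by (simp add: chan_in_def enc_eq xv_lin del: fb_out.simps)
qed

lemma err1_lin: "fst (s 0) - dec1 (rx1 enc n s z) j = lin (e1 n) (s, z)"
proof -
  have "dec1 (rx1 enc n s z) j = (\<Sum>i<n. kap i * fst (fb_out enc s z (Suc i) i))"
    unfolding dec1_def rx1_def by (intro sum.cong refl, subst fb_stable, auto simp del: fb_out.simps)
  then show ?thesis using corr[of n s z] by (simp del: fb_out.simps)
qed

lemma err2_lin: "snd (s 0) - dec2 (rx2 enc n s z) j = lin (e2 n) (s, z)"
proof -
  have "dec2 (rx2 enc n s z) j = (\<Sum>i<n. sg i * kap i * snd (fb_out enc s z (Suc i) i))"
    unfolding dec2_def rx2_def by (intro sum.cong refl, subst fb_stable, auto simp del: fb_out.simps)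
  then show ?thesis using corr[of n s z] by (simp del: fb_out.simps)
qed

end

context sch
begin

lemma supp_e:
  "supp_lt (e1 k) (2 + 2 * k) \<and> supp_lt (e2 k) (2 + 2 * k)"
proof (induction k)
  case 0 then show ?case by (simp add: ev_0 supp_lt_def unit_def)
next
  case (Suc k)
  then show ?case by (auto simp: ev_Suc supp_lt_def unit_def xv_def)
qed

lemma supp_x: "supp_lt (xv k) (2 + 2 * k)"
  using supp_e[of k] by (auto simp: supp_lt_def xv_def)

lemma aux_div: "(x::real) \<noteq> 0 \<Longrightarrow> y / (2 * x) * x = y / 2"
  by (simp add: field_simps)

lemma ar1: "(Q::real) \<noteq> 0 \<Longrightarrow> a - 2 * (P / (2 * Q)) * d + (P * d / (2 * Q * Q)) * Q = a - P * d / (2 * Q)"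
  by (simp add: field_simps)
lemma ar3: "(Q::real) \<noteq> 0 \<Longrightarrow> c - s * (P / (2 * Q)) * d - s * (P / (2 * Q)) * d + s * (P * d / (2 * Q * Q)) * R
   = c - s * (P * d / (2 * Q)) * (2 - R / Q)"
  by (simp add: field_simps)

lemma step_alg:
  fixes A B U V :: "nat \<Rightarrow> real" and \<alpha> c s G \<kappa> :: real
  assumes AA: "Bf A A = \<alpha>" and BB: "Bf B B = \<alpha>" and AB: "Bf A B = c"
    and AU: "Bf A U = 0" and BU: "Bf B U = 0" and AV: "Bf A V = 0" and BV: "Bf B V = 0"
    and UU: "Bf U U = vz" and VV: "Bf V V = vz" and UV: "Bf U V = vz * rz"
    and s: "s * s = 1" "s * c = \<bar>c\<bar>"
    and pos: "\<alpha> + \<bar>c\<bar> > 0" and P: "P > 0"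
    and G: "G * G = P / (2 * (\<alpha> + \<bar>c\<bar>))"
    and \<kappa>: "\<kappa> = G * (\<alpha> + \<bar>c\<bar>) / (P + vz)"
  defines "X \<equiv> (\<lambda>j. G * (A j + s * B j))"
  shows "Bf X X = P"
    and "Bf (\<lambda>j. A j - \<kappa> * (X j + U j)) (\<lambda>j. A j - \<kappa> * (X j + U j)) = \<alpha> - P * (\<alpha> + \<bar>c\<bar>) / (2 * (P + vz))"
    and "Bf (\<lambda>j. B j - s * \<kappa> * (X j + V j)) (\<lambda>j. B j - s * \<kappa> * (X j + V j)) = \<alpha> - P * (\<alpha> + \<bar>c\<bar>) / (2 * (P + vz))"
    and "Bf (\<lambda>j. A j - \<kappa> * (X j + U j)) (\<lambda>j. B j - s * \<kappa> * (X j + V j))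
         = c - s * (P * (\<alpha> + \<bar>c\<bar>) / (2 * (P + vz))) * (2 - (P + vz * rz) / (P + vz))"
proof -
  have BA: "Bf B A = c" using AB Bf_sym by metis
  have UA: "Bf U A = 0" using AU Bf_sym by metis
  have UB: "Bf U B = 0" using BU Bf_sym by metis
  have VA: "Bf V A = 0" using AV Bf_sym by metis
  have VB: "Bf V B = 0" using BV Bf_sym by metis
  have VU: "Bf V U = vz * rz" using UV Bf_sym by metis
  note vals = AA BB AB BA AU BU AV BV UA UB VA VB UU VV UV VU
  note rules = Bf_add1 Bf_add2 Bf_scale1 Bf_scale2 Bf_minus1 Bf_minus2
  let ?d = "\<alpha> + \<bar>c\<bar>"
  have vzp: "P + vz > 0" using P vz by simp
  have sc: "c * s = \<bar>c\<bar>" using s(2) by (simp add: mult.commute)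
  have XX: "Bf X X = G * G * (2 * ?d)"
    unfolding X_def by (simp add: rules vals) (simp add: algebra_simps s sc)
  show "Bf X X = P" unfolding XX G using pos by simp
  have AX: "Bf A X = G * ?d" unfolding X_def by (simp add: rules vals s sc algebra_simps)
  have XA: "Bf X A = G * ?d" using AX Bf_sym by metis
  have BX: "Bf B X = s * G * ?d"
  proof -
    have "Bf B X = G * (c + s * \<alpha>)" unfolding X_def by (simp add: rules vals algebra_simps)
    also have "\<dots> = s * G * ?d"
    proof -
      have "s * \<bar>c\<bar> = c" using s by (metis mult.assoc mult_1)
      then show ?thesis by (simp add: algebra_simps)
    qed
    finally show ?thesis .
  qed
  have XB: "Bf X B = s * G * ?d" using BX Bf_sym by metis
  have XU: "Bf X U = 0" unfolding X_def by (simp add: rules vals)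
  have XV: "Bf X V = 0" unfolding X_def by (simp add: rules vals)
  have UX: "Bf U X = 0" using XU Bf_sym by metis
  have VX: "Bf V X = 0" using XV Bf_sym by metis
  have XXP: "Bf X X = P" unfolding XX G using pos by simp
  note vals2 = vals AX XA BX XB XU XV UX VX XXP
  have kG0: "\<kappa> * G = (G * G) * ?d / (P + vz)" unfolding \<kappa> by (simp add: mult_ac)
  have dn: "?d \<noteq> 0" using pos by simp
  have Gd: "P / (2 * ?d) * ?d = P / 2" using aux_div[OF dn] .
  have kG: "\<kappa> * G = P / (2 * (P + vz))"
    unfolding kG0 G Gd by simp
  have kk0: "\<kappa> * \<kappa> = (G * G) * ?d * ?d / ((P + vz) * (P + vz))" unfolding \<kappa> by (simp add: mult_ac)
  have kk: "\<kappa> * \<kappa> = P * ?d / (2 * (P + vz) * (P + vz))"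
    unfolding kk0 G Gd by (simp add: mult.commute)
  show "Bf (\<lambda>j. A j - \<kappa> * (X j + U j)) (\<lambda>j. A j - \<kappa> * (X j + U j)) = \<alpha> - P * ?d / (2 * (P + vz))"
  proof -
    have "Bf (\<lambda>j. A j - \<kappa> * (X j + U j)) (\<lambda>j. A j - \<kappa> * (X j + U j))
      = \<alpha> - 2 * (\<kappa> * G) * ?d + (\<kappa> * \<kappa>) * (P + vz)"
      by (simp add: rules vals2) (simp add: algebra_simps)
    also have "\<dots> = \<alpha> - P * ?d / (2 * (P + vz))"
      unfolding kG kk using ar1[of "P + vz" \<alpha> ?d] vzp by simp
    finally show ?thesis .
  qed
  show "Bf (\<lambda>j. B j - s * \<kappa> * (X j + V j)) (\<lambda>j. B j - s * \<kappa> * (X j + V j)) = \<alpha> - P * ?d / (2 * (P + vz))"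
  proof -
    have "Bf (\<lambda>j. B j - s * \<kappa> * (X j + V j)) (\<lambda>j. B j - s * \<kappa> * (X j + V j))
      = \<alpha> - 2 * (s * s) * (\<kappa> * G) * ?d + (s * s) * (\<kappa> * \<kappa>) * (P + vz)"
      by (simp add: rules vals2) (simp add: algebra_simps)
    also have "\<dots> = \<alpha> - P * ?d / (2 * (P + vz))"
      unfolding kG kk s(1) using ar1[of "P + vz" \<alpha> ?d] vzp by simp
    finally show ?thesis .
  qed
  show "Bf (\<lambda>j. A j - \<kappa> * (X j + U j)) (\<lambda>j. B j - s * \<kappa> * (X j + V j))
         = c - s * (P * ?d / (2 * (P + vz))) * (2 - (P + vz * rz) / (P + vz))"
  proof -
    have "Bf (\<lambda>j. A j - \<kappa> * (X j + U j)) (\<lambda>j. B j - s * \<kappa> * (X j + V j))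
      = c - s * (\<kappa> * G) * ?d - s * (\<kappa> * G) * ?d + s * (\<kappa> * \<kappa>) * (P + vz * rz)"
      by (simp add: rules vals2) (simp add: algebra_simps)
    also have "\<dots> = c - s * (P * ?d / (2 * (P + vz))) * (2 - (P + vz * rz) / (P + vz))"
      unfolding kG kk using ar3[of "P + vz" c s ?d "P + vz * rz"] vzp by simp
    finally show ?thesis .
  qed
qed

lemma sg_props: "sg k * sg k = 1" "sg k * cc k = \<bar>cc k\<bar>"
  by (auto simp: sg_def)

lemma Gn_sq: "al k + \<bar>cc k\<bar> > 0 \<Longrightarrow> P > 0 \<Longrightarrow> Gn k * Gn k = P / (2 * (al k + \<bar>cc k\<bar>))"
  unfolding Gn_def by (simp add: real_sqrt_mult[symmetric])

lemma moments:
  assumes P: "P > 0" and pos: "\<And>i. i < k \<Longrightarrow> al i + \<bar>cc i\<bar> > 0" and k: "k \<le> n"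
  shows "Bf (e1 k) (e1 k) = al k \<and> Bf (e2 k) (e2 k) = al k \<and> Bf (e1 k) (e2 k) = cc k"
  using pos k
proof (induction k)
  case 0
  have "0 < Nn" "1 < Nn" by (simp_all add: Nn_def)
  then show ?case by (simp add: ev_0 st_0 Bf_units Cm_def)
next
  case (Suc k)
  have k: "k < n" using Suc.prems by simp
  have IH: "Bf (e1 k) (e1 k) = al k \<and> Bf (e2 k) (e2 k) = al k \<and> Bf (e1 k) (e2 k) = cc k"
    using Suc by simp
  have pk: "al k + \<bar>cc k\<bar> > 0" using Suc.prems by simp
  have nn: "2 + 2 * k < Nn" "3 + 2 * k < Nn" using k by (simp_all add: Nn_def)
  have z: "Bf (e1 k) (unit (2 + 2 * k)) = 0" "Bf (e2 k) (unit (2 + 2 * k)) = 0"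
          "Bf (e1 k) (unit (3 + 2 * k)) = 0" "Bf (e2 k) (unit (3 + 2 * k)) = 0"
    using supp_e[of k] k by (auto intro!: Bf_noise_zero)
  have u: "Bf (unit (2 + 2 * k)) (unit (2 + 2 * k)) = vz" "Bf (unit (3 + 2 * k)) (unit (3 + 2 * k)) = vz"
          "Bf (unit (2 + 2 * k)) (unit (3 + 2 * k)) = vz * rz"
    using nn by (simp_all add: Bf_units Cm_def)
  note sa = step_alg[OF IH[THEN conjunct1] IH[THEN conjunct2, THEN conjunct1] IH[THEN conjunct2, THEN conjunct2]
      z(1) z(2) z(3) z(4) u(1) u(2) u(3) sg_props(1) sg_props(2) pk P Gn_sq[OF pk P] kap_def]
  show ?case
    unfolding ev_Suc xv_def st_Suc using sa(2,3,4) by (simp add: gam_def)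
qed

lemma energy_step:
  assumes P: "P > 0" and pos: "\<And>i. i \<le> k \<Longrightarrow> al i + \<bar>cc i\<bar> > 0" and k: "k < n"
  shows "Bf (xv k) (xv k) = P"
proof -
  have pk: "al k + \<bar>cc k\<bar> > 0" using pos by simp
  have IH: "Bf (e1 k) (e1 k) = al k \<and> Bf (e2 k) (e2 k) = al k \<and> Bf (e1 k) (e2 k) = cc k"
    using moments[OF P, of k] pos k by simp
  have nn: "2 + 2 * k < Nn" "3 + 2 * k < Nn" using k by (simp_all add: Nn_def)
  have z: "Bf (e1 k) (unit (2 + 2 * k)) = 0" "Bf (e2 k) (unit (2 + 2 * k)) = 0"
          "Bf (e1 k) (unit (3 + 2 * k)) = 0" "Bf (e2 k) (unit (3 + 2 * k)) = 0"
    using supp_e[of k] k by (auto intro!: Bf_noise_zero)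
  have u: "Bf (unit (2 + 2 * k)) (unit (2 + 2 * k)) = vz" "Bf (unit (3 + 2 * k)) (unit (3 + 2 * k)) = vz"
          "Bf (unit (2 + 2 * k)) (unit (3 + 2 * k)) = vz * rz"
    using nn by (simp_all add: Bf_units Cm_def)
  note sa = step_alg[OF IH[THEN conjunct1] IH[THEN conjunct2, THEN conjunct1] IH[THEN conjunct2, THEN conjunct2]
      z(1) z(2) z(3) z(4) u(1) u(2) u(3) sg_props(1) sg_props(2) pk P Gn_sq[OF pk P] kap_def]
  show ?thesis unfolding xv_def using sa(1) by simp
qed

end

lemma lin_aux: "(0::real) \<le> Q * (G - 1) \<Longrightarrow> d \<le> al \<Longrightarrow> d - Q * G \<le> al - Q"
proof -
  assume a: "0 \<le> Q * (G - 1)" "d \<le> al"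
  have "Q * G = Q * (G - 1) + Q" by (simp add: algebra_simps)
  then show ?thesis using a by linarith
qed

lemma lin_aux2: "(Q::real) * (G + 1) \<le> al + d \<Longrightarrow> \<bar>d - Q * G\<bar> \<le> al - Q \<longleftrightarrow> d - Q * G \<le> al - Q"
proof -
  assume a: "Q * (G + 1) \<le> al + d"
  have "Q * G = Q * (G + 1) - Q" by (simp add: algebra_simps)
  then show ?thesis using a by (auto simp: abs_le_iff)
qed

lemma inv_step:
  fixes al d t rz :: real
  assumes al: "al > 0" and d: "0 \<le> d" "d \<le> al" and t: "0 < t" "t \<le> 1/2" and rz: "\<bar>rz\<bar> < 1"
  shows "al - t * (al + d) / 2 > 0"
    and "\<bar>d - t * (al + d) / 2 * (2 - rz - t * (1 - rz))\<bar> \<le> al - t * (al + d) / 2"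
    and "al - t * (al + d) / 2 \<le> al * (1 - t / 2)"
proof -
  let ?q = "t * (al + d) / 2" and ?g = "2 - rz - t * (1 - rz)"
  have q0: "0 \<le> ?q" using t al d by simp
  have q1: "?q \<le> t * al" using t d by (simp add: mult_left_mono)
  have q2: "t * al \<le> al / 2" using t al by (simp add: mult_right_mono)
  show "al - ?q > 0" using q1 q2 al by linarith
  have g1: "?g - 1 = (1 - rz) * (1 - t)" by (simp add: algebra_simps)
  have g1n: "?g - 1 \<ge> 0" unfolding g1 using rz t by (intro mult_nonneg_nonneg) auto
  have g4: "?g + 1 \<le> 4" using rz t by (smt (verit) mult_nonneg_nonneg)
  have A: "d - ?q * ?g \<le> al - ?q"
  proof -
    have "?q * (?g - 1) \<ge> 0" using q0 g1n by simp
    then show ?thesis using d by (intro lin_aux) auto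
  qed
  have B: "?q * (?g + 1) \<le> al + d"
  proof -
    have "?q * (?g + 1) \<le> ?q * 4" using g4 q0 by (rule mult_left_mono)
    also have "\<dots> = 2 * t * (al + d)" by simp
    also have "\<dots> \<le> 1 * (al + d)" using t al d by (intro mult_right_mono) auto
    finally show ?thesis by simp
  qed
  show "\<bar>d - ?q * ?g\<bar> \<le> al - ?q" using A lin_aux2[OF B] by simp
  show "al - ?q \<le> al * (1 - t / 2)" using t d by (simp add: algebra_simps)
qed

lemma ln_1m_lower:
  fixes z :: real assumes "0 \<le> z" "z < 1"
  shows "ln (1 - z) \<ge> - z / (1 - z)"
proof -
  have p: "0 < 1 / (1 - z)" using assms by simp
  have "ln (1 / (1 - z)) \<le> 1 / (1 - z) - 1" using ln_le_minus_one[OF p] .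
  moreover have "ln (1 / (1 - z)) = - ln (1 - z)" using assms by (simp add: ln_div)
  moreover have "1 / (1 - z) - 1 = z / (1 - z)" using assms by (simp add: field_simps)
  ultimately show ?thesis by simp
qed

lemma ln_1m_upper:
  fixes y :: real assumes "y < 1"
  shows "ln (1 - y) \<le> - y"
  using ln_le_minus_one[of "1 - y"] assms by simp

lemma numaux: "(1::real) - w \<noteq> 0 \<Longrightarrow> N \<noteq> 0 \<Longrightarrow> (N + \<rho>) - (\<rho> - w * ((N + \<rho>) - k)) / (1 - w) = N * (1 - w * k / N) / (1 - w)"
  by (simp add: field_simps)

lemma denaux: "(1::real) - t * (1 + \<rho>) / 2 \<noteq> 0 \<Longrightarrow>
   1 + (\<rho> - (t * (1 + \<rho>) / 2) * g) / (1 - t * (1 + \<rho>) / 2) = (1 + \<rho>) * (1 - t * (1 + g) / 2) / (1 - t * (1 + \<rho>) / 2)"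
  by (simp add: field_simps)

lemma ratioaux: "(W::real) \<noteq> 0 \<Longrightarrow> B \<noteq> 0 \<Longrightarrow> Y \<noteq> 0 \<Longrightarrow> (A * X / W) / (B * Y / W) = (A / B) * (X / Y)"
  by (simp add: field_simps)

lemma p1_rho:
  fixes t rz \<rho> :: real
  assumes t: "0 < t" "t \<le> 1/100" and rz: "\<bar>rz\<bar> < 1" and r: "3 * t < \<rho>" "\<rho> \<le> 1"
  defines "a \<equiv> 2 - rz" and "gm \<equiv> 2 - rz - t * (1 - rz)" and "w \<equiv> t * (1 + \<rho>) / 2"
  defines "\<rho>' \<equiv> (\<rho> - w * gm) / (1 - w)"
  shows "\<rho>' \<ge> 0" "\<rho> - \<rho>' \<le> 6 * t" "\<rho> - \<rho>' \<ge> t * (1 - rz) * (1 - t) / 2" "\<rho>' \<le> 1"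
    "ln ((a - \<rho>') / (1 + \<rho>')) - ln ((a - \<rho>) / (1 + \<rho>)) \<ge> t * (a + 1) / 2 * (1 - 3 * t)"
proof -
  have c0: "0 < 1 - rz" "1 - rz < 2" using rz by auto
  have w0: "t / 2 \<le> w" "w \<le> t" using t r unfolding w_def by (auto simp: field_simps)
  have wlt: "w < 1" using w0 t by simp
  have gm1: "gm - 1 = (1 - rz) * (1 - t)" unfolding gm_def by (simp add: algebra_simps)
  have ct0: "(1 - rz) * (1 - t) \<ge> 0" by (rule mult_nonneg_nonneg) (use c0 t in auto)
  have gm1n: "gm \<ge> 1" using gm1 ct0 by linarith
  have tc0: "t * (1 - rz) \<ge> 0" by (rule mult_nonneg_nonneg) (use c0 t in auto)
  have gm3: "gm \<le> 3" unfolding gm_def using rz tc0 by linarith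
  have wg: "w * gm \<le> 3 * t"
  proof -
    have "w * gm \<le> t * 3" using w0 gm3 gm1n t by (intro mult_mono) auto
    then show ?thesis by simp
  qed
  have num0: "\<rho> - w * gm > 0" using wg r by simp
  show "\<rho>' \<ge> 0" unfolding \<rho>'_def using num0 wlt by simp
  have diff: "\<rho> - \<rho>' = w * (gm - \<rho>) / (1 - w)"
    unfolding \<rho>'_def using wlt by (simp add: field_simps)
  have gr: "0 \<le> gm - \<rho>" "gm - \<rho> \<le> 3" using gm1n r gm3 t by auto
  have "w * (gm - \<rho>) \<le> t * 3" using w0 gr t by (intro mult_mono) auto
  moreover have "1 - w \<ge> 1/2" using w0 t by simp
  ultimately have "w * (gm - \<rho>) / (1 - w) \<le> (t * 3) / (1/2)"
    using w0 gr t by (intro frac_le) auto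
  then show "\<rho> - \<rho>' \<le> 6 * t" unfolding diff by simp
  have "t / 2 * ((1 - rz) * (1 - t)) \<le> w * (gm - \<rho>)"
    using w0 gm1 r t c0 by (intro mult_mono) auto
  also have "\<dots> \<le> w * (gm - \<rho>) / (1 - w)"
  proof -
    have "0 \<le> w * (gm - \<rho>)" using w0 gr t by simp
    moreover have "0 < 1 - w" "1 - w \<le> 1" using wlt w0 t by auto
    ultimately show ?thesis by (simp add: le_divide_eq mult_left_le)
  qed
  finally show "\<rho> - \<rho>' \<ge> t * (1 - rz) * (1 - t) / 2" unfolding diff by (simp add: mult_ac)
  have "t * (1 - rz) * (1 - t) / 2 \<ge> 0" using ct0 t by (simp add: mult.assoc)
  then show "\<rho>' \<le> 1" using \<open>\<rho> - \<rho>' \<ge> t * (1 - rz) * (1 - t) / 2\<close> r by linarith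
  let ?c0 = "1 - rz"
  have a1: "a - \<rho> \<ge> ?c0" unfolding a_def using r by simp
  have ap: "a - \<rho> > 0" using a1 c0 by simp
  define z where "z = w * t * ?c0 / (a - \<rho>)"
  define y where "y = t * (1 + gm) / 2"
  have z0: "0 \<le> z" unfolding z_def using w0 t c0 ap by simp
  have zt: "z \<le> t * t"
  proof -
    have "?c0 / (a - \<rho>) \<le> 1" using a1 ap c0 by simp
    then have "w * t * (?c0 / (a - \<rho>)) \<le> t * t * 1"
      using w0 t c0 ap by (intro mult_mono) auto
    then show ?thesis unfolding z_def by simp
  qed
  have "t * t \<le> t * 1" using t by (intro mult_left_mono) auto
  then have tt: "t * t \<le> 1/100" using t by linarith
  have z1: "z < 1" using zt tt by simp
  have "t * (1 + gm) \<le> t * 4" using t gm3 by (intro mult_left_mono) auto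
  then have y1: "y < 1" unfolding y_def using t by linarith
  have yv: "y = t * (a + 1) / 2 - t * t * ?c0 / 2" unfolding y_def gm_def a_def by (simp add: field_simps)
  have gma: "gm = a - t * ?c0" unfolding gm_def a_def by simp
  have num': "a - \<rho>' = (a - \<rho>) * (1 - z) / (1 - w)"
    using numaux[of w "a - \<rho>" \<rho> "t * ?c0"] wlt ap unfolding \<rho>'_def z_def gma by (simp add: mult.assoc)
  have den': "1 + \<rho>' = (1 + \<rho>) * (1 - y) / (1 - w)"
    using denaux[of t \<rho> gm] wlt unfolding \<rho>'_def y_def w_def by simp
  have rp: "1 + \<rho> > 0" using r t by simp
  have ratio: "(a - \<rho>') / (1 + \<rho>') = ((a - \<rho>) / (1 + \<rho>)) * ((1 - z) / (1 - y))"
    unfolding num' den' using ratioaux wlt y1 rp by simp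
  have lnr: "ln ((a - \<rho>') / (1 + \<rho>')) = ln ((a - \<rho>) / (1 + \<rho>)) + ln (1 - z) - ln (1 - y)"
    unfolding ratio using ap rp z1 y1 by (simp add: ln_mult ln_div)
  have lz: "ln (1 - z) \<ge> - (2 * (t * t))"
  proof -
    have "ln (1 - z) \<ge> - z / (1 - z)" using ln_1m_lower z0 z1 by simp
    moreover have "z / (1 - z) \<le> 2 * (t * t)"
    proof -
      have "1 - z \<ge> 1/2" using zt tt by simp
      then have "z / (1 - z) \<le> z / (1/2)" using z0 by (intro divide_left_mono) auto
      then show ?thesis using zt by simp
    qed
    ultimately show ?thesis by simp
  qed
  have ly: "- ln (1 - y) \<ge> y" using ln_1m_upper[OF y1] by simp
  have "t * t * ?c0 \<le> t * t * 2" using c0 by (intro mult_left_mono) auto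
  then have "t * t * ?c0 / 2 \<le> t * t" by simp
  have "ln ((a - \<rho>') / (1 + \<rho>')) - ln ((a - \<rho>) / (1 + \<rho>)) \<ge> t * (a + 1) / 2 - 3 * (t * t)"
    using lnr lz ly yv \<open>t * t * ?c0 / 2 \<le> t * t\<close> by linarith
  moreover have "t * (a + 1) / 2 * (1 - 3 * t) \<le> t * (a + 1) / 2 - 3 * (t * t)"
  proof -
    have "(a + 1) / 2 \<ge> 1" unfolding a_def using rz by simp
    then have m: "3 * t * t * 1 \<le> 3 * t * t * ((a + 1) / 2)" using t by (intro mult_left_mono) auto
    have e: "t * (a + 1) / 2 * (1 - 3 * t) = t * (a + 1) / 2 - 3 * t * t * ((a + 1) / 2)"
      by (simp add: field_simps)
    show ?thesis unfolding e using m by linarith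
  qed
  ultimately show "ln ((a - \<rho>') / (1 + \<rho>')) - ln ((a - \<rho>) / (1 + \<rho>)) \<ge> t * (a + 1) / 2 * (1 - 3 * t)"
    by linarith
qed

lemma auxq: "(1::real) - t \<noteq> 0 \<Longrightarrow> 1 - 3 * t \<noteq> 0 \<Longrightarrow> a + 1 \<noteq> 0 \<Longrightarrow>
  k * (v * t / (1 - t)) = (2 * v / (a + 1)) * (k * (t * (a + 1) / 2 * (1 - 3 * t))) / ((1 - t) * (1 - 3 * t))"
proof -
  assume h: "(1::real) - t \<noteq> 0" "1 - 3 * t \<noteq> 0" "a + 1 \<noteq> 0"
  have 1: "(2 * v / (a + 1)) * (k * (t * (a + 1) / 2 * (1 - 3 * t))) = (k * (v * t)) * (1 - 3 * t)"
    using h(3) by (simp add: field_simps)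
  have 2: "(k * (v * t)) * (1 - 3 * t) / ((1 - t) * (1 - 3 * t)) = k * (v * t) / (1 - t)"
    using h(2) by simp
  show ?thesis unfolding 1 2 by simp
qed

lemma auxL: "(1::real) - t \<noteq> 0 \<Longrightarrow> (M + 1) * (v * t / (1 - t)) = v * (t * M + t) / (1 - t)"
  by (simp add: field_simps)

lemma auxmax: "(t::real) > 0 \<Longrightarrow> t * max 0 (y / t) = max 0 y"
  by (auto simp: max_def field_simps)

lemma auxm: "real (K + L + 1) * (p::real) = real K * p + real L * p + p"
  by (simp add: algebra_simps)

context sch
begin

definition tt :: real where "tt = P / (P + vz)"

lemma tt_q: "P * x / (2 * (P + vz)) = tt * x / 2"
  unfolding tt_def by simp

lemma gam_tt: "P > 0 \<Longrightarrow> gam = 2 - rz - tt * (1 - rz)"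
proof -
  assume P: "P > 0"
  have pv: "P + vz > 0" using P vz by simp
  show ?thesis unfolding gam_def tt_def using pv by (simp add: field_simps)
qed

lemma al_Suc_t: "al (Suc k) = al k - tt * (al k + \<bar>cc k\<bar>) / 2"
  using st_Suc(1)[of k] unfolding tt_q .

lemma cc_Suc_t: "P > 0 \<Longrightarrow> \<bar>cc (Suc k)\<bar> = \<bar>\<bar>cc k\<bar> - tt * (al k + \<bar>cc k\<bar>) / 2 * (2 - rz - tt * (1 - rz))\<bar>"
proof -
  assume P: "P > 0"
  have "cc (Suc k) = sg k * (\<bar>cc k\<bar> - tt * (al k + \<bar>cc k\<bar>) / 2 * (2 - rz - tt * (1 - rz)))"
  proof -
    have c: "cc k = sg k * \<bar>cc k\<bar>" by (simp add: sg_def)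
    have "cc (Suc k) = cc k - sg k * (tt * (al k + \<bar>cc k\<bar>) / 2) * (2 - rz - tt * (1 - rz))"
      using st_Suc(2)[of k] unfolding tt_q gam_tt[OF P] .
    also have "\<dots> = sg k * \<bar>cc k\<bar> - sg k * (tt * (al k + \<bar>cc k\<bar>) / 2) * (2 - rz - tt * (1 - rz))"
      using c by simp
    finally show ?thesis by (simp add: algebra_simps)
  qed
  then show ?thesis by (simp add: abs_mult sg_def)
qed

lemma tt_pos: "P > 0 \<Longrightarrow> tt > 0" unfolding tt_def using vz by simp

lemma inv_all:
  assumes P: "P > 0" and t: "tt \<le> 1/2"
  shows "al k > 0 \<and> \<bar>cc k\<bar> \<le> al k"
proof (induction k)
  case 0
  have "\<bar>vs * rs\<bar> \<le> vs" using vs rs by (simp add: abs_mult)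
  then show ?case using vs by (simp add: st_0)
next
  case (Suc k)
  have a0: "al k > 0" "0 \<le> \<bar>cc k\<bar>" "\<bar>cc k\<bar> \<le> al k" using Suc.IH by auto
  note I = inv_step[of "al k" "\<bar>cc k\<bar>" tt rz, OF a0 tt_pos[OF P] t rz]
  show ?case using I unfolding al_Suc_t cc_Suc_t[OF P] by blast
qed

lemma al_decr:
  assumes P: "P > 0" and t: "tt \<le> 1/2"
  shows "al (Suc k) \<le> al k * (1 - tt / 2)" "al (Suc k) \<le> al k"
proof -
  note iv = inv_all[OF P t, of k]
  have a0: "al k > 0" "0 \<le> \<bar>cc k\<bar>" "\<bar>cc k\<bar> \<le> al k" using iv by auto
  note I = inv_step[of "al k" "\<bar>cc k\<bar>" tt rz, OF a0 tt_pos[OF P] t rz]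
  show 1: "al (Suc k) \<le> al k * (1 - tt / 2)" using I(3) unfolding al_Suc_t .
  have "0 \<le> al k * tt" using a0 tt_pos[OF P] by simp
  then have "al k * (1 - tt / 2) \<le> al k" by (simp add: algebra_simps)
  then show "al (Suc k) \<le> al k" using 1 by linarith
qed

definition rho :: "nat \<Rightarrow> real" where "rho k = \<bar>cc k\<bar> / al k"
definition uu :: "nat \<Rightarrow> real" where "uu k = (2 - rz) * al k - \<bar>cc k\<bar>"

lemma rho_bounds: "P > 0 \<Longrightarrow> tt \<le> 1/2 \<Longrightarrow> 0 \<le> rho k \<and> rho k \<le> 1"
  using inv_all[of k] unfolding rho_def by auto

lemma phase_step:
  assumes P: "P > 0" and t: "tt \<le> 1/100" and r: "3 * tt < rho k"
  shows "rho k - rho (Suc k) \<le> 6 * tt"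
    "rho k - rho (Suc k) \<ge> tt * (1 - rz) * (1 - tt) / 2"
    "rho (Suc k) \<ge> 0"
    "ln (((2 - rz) - rho (Suc k)) / (1 + rho (Suc k))) - ln (((2 - rz) - rho k) / (1 + rho k))
       \<ge> tt * ((2 - rz) + 1) / 2 * (1 - 3 * tt)"
    "uu (Suc k) \<le> uu k"
proof -
  have t2: "tt \<le> 1/2" using t by simp
  have t0: "0 < tt" using tt_pos[OF P] .
  note iv = inv_all[OF P t2, of k]
  define \<alpha> where "\<alpha> = al k"
  define \<rho> where "\<rho> = rho k"
  define w where "w = tt * (1 + \<rho>) / 2"
  define gm where "gm = 2 - rz - tt * (1 - rz)"
  have \<alpha>0: "\<alpha> > 0" using iv \<alpha>_def by simp
  have r1: "\<rho> \<le> 1" using rho_bounds[OF P t2] \<rho>_def by simp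
  have d: "\<bar>cc k\<bar> = \<rho> * \<alpha>" unfolding \<rho>_def \<alpha>_def rho_def using \<alpha>0 \<alpha>_def by simp
  note pr = p1_rho[OF t0 t rz r[folded \<rho>_def] r1, folded w_def gm_def]
  have "tt * (1 + \<rho>) \<le> tt * 2" using r1 t0 by (intro mult_left_mono) auto
  then have "w \<le> tt" unfolding w_def by simp
  then have wl: "w < 1" using t by simp
  have aS: "al (Suc k) = \<alpha> * (1 - w)"
    unfolding al_Suc_t \<alpha>_def[symmetric] d w_def by (simp add: algebra_simps)
  have nn: "\<rho> - w * gm \<ge> 0"
  proof -
    have "(\<rho> - w * gm) / (1 - w) \<ge> 0" using pr(1) .
    then show ?thesis using wl by (simp add: divide_nonneg_pos zero_le_divide_iff)
  qed
  have cS: "\<bar>cc (Suc k)\<bar> = \<alpha> * (\<rho> - w * gm)"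
  proof -
    have "\<bar>cc (Suc k)\<bar> = \<bar>\<rho> * \<alpha> - tt * (\<alpha> + \<rho> * \<alpha>) / 2 * gm\<bar>"
      unfolding cc_Suc_t[OF P] \<alpha>_def[symmetric] d gm_def ..
    also have "\<rho> * \<alpha> - tt * (\<alpha> + \<rho> * \<alpha>) / 2 * gm = \<alpha> * (\<rho> - w * gm)"
      unfolding w_def by (simp add: algebra_simps)
    finally show ?thesis using nn \<alpha>0 by simp
  qed
  have rS: "rho (Suc k) = (\<rho> - w * gm) / (1 - w)"
    unfolding rho_def cS aS using \<alpha>0 wl by simp
  show "rho k - rho (Suc k) \<le> 6 * tt" using pr(2) rS \<rho>_def by simp
  show "rho k - rho (Suc k) \<ge> tt * (1 - rz) * (1 - tt) / 2" using pr(3) rS \<rho>_def by simp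
  show "rho (Suc k) \<ge> 0" using pr(1) rS by simp
  show "ln (((2 - rz) - rho (Suc k)) / (1 + rho (Suc k))) - ln (((2 - rz) - rho k) / (1 + rho k))
       \<ge> tt * ((2 - rz) + 1) / 2 * (1 - 3 * tt)" using pr(5) rS \<rho>_def by simp
  have "uu (Suc k) = uu k - \<alpha> * w * ((2 - rz) - gm)"
    unfolding uu_def aS cS d \<alpha>_def[symmetric] by (simp add: algebra_simps)
  moreover have "\<alpha> * w * ((2 - rz) - gm) \<ge> 0"
  proof -
    have "(2 - rz) - gm = tt * (1 - rz)" unfolding gm_def by simp
    moreover have "tt * (1 - rz) \<ge> 0" using t0 rz by simp
    moreover have "w \<ge> 0" unfolding w_def using t0 r \<rho>_def by simp
    ultimately show ?thesis using \<alpha>0 by simp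
  qed
  ultimately show "uu (Suc k) \<le> uu k" by simp
qed

lemma rho0: "rho 0 = \<bar>rs\<bar>" using vs by (simp add: rho_def st_0 abs_mult)
lemma uu0: "uu 0 = vs * ((2 - rz) - \<bar>rs\<bar>)" using vs by (simp add: uu_def st_0 abs_mult algebra_simps)

lemma Ptt_aux: "(Q::real) \<noteq> 0 \<Longrightarrow> v \<noteq> 0 \<Longrightarrow> v * (x / Q) / (v / Q) = x"
  by (simp add: field_simps)

lemma P_tt: "P > 0 \<Longrightarrow> P = vz * tt / (1 - tt)"
proof -
  assume P: "P > 0"
  have pv: "P + vz > 0" using P vz by simp
  have "1 - tt = vz / (P + vz)" unfolding tt_def using pv by (simp add: field_simps)
  then show ?thesis unfolding tt_def using Ptt_aux[of "P + vz" vz P] pv vz by simp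
qed

lemma exists_K:
  assumes P: "P > 0" and t: "tt \<le> 1/100" and th: "Thr > 0" "Thr \<ge> 3 * tt"
  shows "\<exists>k. rho k \<le> Thr"
proof (rule ccontr)
  assume "\<not> (\<exists>k. rho k \<le> Thr)"
  then have big: "\<And>k. rho k > Thr" by (simp add: not_le)
  define \<delta> where "\<delta> = tt * (1 - rz) * (1 - tt) / 2"
  have \<delta>0: "\<delta> > 0" unfolding \<delta>_def using tt_pos[OF P] rz t by simp
  have dec: "rho k \<le> rho 0 - real k * \<delta>" for k
  proof (induction k)
    case 0 then show ?case by simp
  next
    case (Suc k)
    have "3 * tt < rho k" using big[of k] th by simp
    from phase_step(2)[OF P t this] have "rho (Suc k) \<le> rho k - \<delta>" unfolding \<delta>_def by linarith
    moreover have "real (Suc k) * \<delta> = real k * \<delta> + \<delta>" by (simp add: distrib_right)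
    ultimately show ?case using Suc.IH by linarith
  qed
  obtain k :: nat where k: "1 / \<delta> < real k" using reals_Archimedean2 by blast
  then have "1 < real k * \<delta>" using \<delta>0 by (simp add: field_simps)
  moreover have "rho 0 \<le> 1" using rho_bounds[OF P] t by simp
  ultimately have "rho k < 0" using dec[of k] by simp
  then show False using big[of k] th by simp
qed

lemma al_pow:
  assumes P: "P > 0" and t: "tt \<le> 1/2"
  shows "al (K + j) \<le> al K * (1 - tt / 2) ^ j"
proof (induction j)
  case 0 then show ?case by simp
next
  case (Suc j)
  have "al (K + Suc j) \<le> al (K + j) * (1 - tt / 2)" using al_decr(1)[OF P t, of "K + j"] by simp
  also have "\<dots> \<le> al K * (1 - tt / 2) ^ j * (1 - tt / 2)"
    using Suc t by (intro mult_right_mono) auto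
  finally show ?case by (simp add: mult_ac)
qed

lemma al_mono_le:
  assumes P: "P > 0" and t: "tt \<le> 1/2" and "i \<le> j"
  shows "al j \<le> al i"
  using assms(3)
proof (induction j)
  case 0 then show ?case by simp
next
  case (Suc j)
  show ?case
  proof (cases "i = Suc j")
    case True then show ?thesis by simp
  next
    case False
    then have "i \<le> j" using Suc.prems by simp
    then show ?thesis using Suc.IH al_decr(2)[OF P t, of j] by simp
  qed
qed

lemma ln_ratio_mono:
  fixes a x y :: real
  assumes "-1 < x" "x \<le> y" "y < a"
  shows "ln ((a - y) / (1 + y)) \<le> ln ((a - x) / (1 + x))"
proof -
  have p: "0 < (a - y) / (1 + y)" using assms by simp
  have "(a - y) / (1 + y) \<le> (a - x) / (1 + x)"
  proof -
    have "(a - y) * (1 + x) \<le> (a - x) * (1 + y)"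
    proof -
      have "(a - x) * (1 + y) - (a - y) * (1 + x) = (y - x) * (a + 1)" by (simp add: algebra_simps)
      moreover have "(y - x) * (a + 1) \<ge> 0" using assms by simp
      ultimately show ?thesis by linarith
    qed
    then show ?thesis using assms by (simp add: divide_simps)
  qed
  then show ?thesis using p by simp
qed

lemma analysis:
  assumes P: "P > 0" and t: "tt \<le> 1/100" and rs0: "0 \<le> \<rho>s" "\<rho>s \<le> \<bar>rs\<bar>" and Dd: "Dd > 0"
  defines "Thr \<equiv> max \<rho>s (3 * tt)"
  defines "At \<equiv> vs * ((2 - rz) - \<bar>rs\<bar>) / ((2 - rz) - Thr)"
  shows "\<exists>m>0. al m \<le> Dd \<and> real m * P \<le>
     (2 * vz / ((2 - rz) + 1)) * (ln (((2 - rz) - \<rho>s + 6 * tt) / (1 + \<rho>s - 6 * tt)) - ln (((2 - rz) - \<bar>rs\<bar>) / (1 + \<bar>rs\<bar>)))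
        / ((1 - tt) * (1 - 3 * tt))
     + vz * (max 0 (2 * ln (At / Dd)) + tt) / (1 - tt) + vz * tt / (1 - tt)"
proof -
  let ?a = "2 - rz" and ?b = "\<bar>rs\<bar>"
  let ?h = "\<lambda>x. ln ((?a - x) / (1 + x))"
  let ?c1 = "tt * (?a + 1) / 2 * (1 - 3 * tt)"
  have t0: "tt > 0" using tt_pos[OF P] .
  have t2: "tt \<le> 1/2" using t by simp
  have th0: "Thr > 0" "Thr \<ge> 3 * tt" "Thr \<ge> \<rho>s" unfolding Thr_def using t0 by auto
  have thlt: "Thr < 1" unfolding Thr_def using rs0 rs t by simp
  have a1: "?a > 1" using rz by simp
  obtain K0 where "rho K0 \<le> Thr" using exists_K[OF P t th0(1,2)] by blast
  define K where "K = (LEAST k. rho k \<le> Thr)"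
  have rK: "rho K \<le> Thr" unfolding K_def by (rule LeastI) fact
  have below: "\<And>j. j < K \<Longrightarrow> rho j > Thr" unfolding K_def using not_less_Least by (metis not_le)
  have c1p: "?c1 > 0" using t0 t a1 by simp
  have ind: "\<And>j. j \<le> K \<Longrightarrow> ?h (rho j) - ?h (rho 0) \<ge> real j * ?c1 \<and> uu j \<le> uu 0"
  proof -
    fix j show "j \<le> K \<Longrightarrow> ?h (rho j) - ?h (rho 0) \<ge> real j * ?c1 \<and> uu j \<le> uu 0"
    proof (induction j)
      case 0 then show ?case by simp
    next
      case (Suc j)
      have jK: "j < K" using Suc.prems by simp
      have "3 * tt < rho j" using below[OF jK] th0 by simp
      note ps = phase_step[OF P t this]
      have IH: "?h (rho j) - ?h (rho 0) \<ge> real j * ?c1 \<and> uu j \<le> uu 0" using Suc.IH jK by simp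
      have "real (Suc j) * ?c1 = real j * ?c1 + ?c1" by (simp add: distrib_right)
      then show ?case using IH ps(4) ps(5) by linarith
    qed
  qed
  have hK: "?h (rho K) - ?h (rho 0) \<ge> real K * ?c1" and uK: "uu K \<le> uu 0" using ind[of K] by auto
  have rKlow: "rho K \<ge> \<rho>s - 6 * tt"
  proof (cases K)
    case 0 then show ?thesis using rho0 rs0 t0 by simp
  next
    case (Suc j)
    then have "j < K" by simp
    then have "rho j > Thr" by (rule below)
    then have "3 * tt < rho j" using th0 by simp
    note ps = phase_step(1)[OF P t this]
    show ?thesis using ps \<open>rho j > Thr\<close> th0 Suc by simp
  qed
  have rKb: "0 \<le> rho K" "rho K \<le> 1" using rho_bounds[OF P t2] by auto
  have hup: "?h (rho K) \<le> ln ((?a - \<rho>s + 6 * tt) / (1 + \<rho>s - 6 * tt))"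
  proof -
    have "?h (rho K) \<le> ?h (\<rho>s - 6 * tt)"
      by (rule ln_ratio_mono) (use rKlow rKb rs0 t a1 in auto)
    then show ?thesis by (simp add: algebra_simps)
  qed
  have h0: "?h (rho 0) = ln ((?a - ?b) / (1 + ?b))" by (simp add: rho0)
  have Ptt: "P = vz * tt / (1 - tt)" by (rule P_tt[OF P])
  have E1: "real K * P \<le> (2 * vz / (?a + 1)) * (ln ((?a - \<rho>s + 6 * tt) / (1 + \<rho>s - 6 * tt)) - ln ((?a - ?b) / (1 + ?b)))
        / ((1 - tt) * (1 - 3 * tt))"
  proof -
    have q: "real K * P = (2 * vz / (?a + 1)) * (real K * ?c1) / ((1 - tt) * (1 - 3 * tt))"
      using auxq[of tt ?a "real K" vz] t a1 Ptt by simp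
    have "real K * ?c1 \<le> ln ((?a - \<rho>s + 6 * tt) / (1 + \<rho>s - 6 * tt)) - ln ((?a - ?b) / (1 + ?b))"
      using hK hup h0 by linarith
    moreover have "0 \<le> 2 * vz / (?a + 1)" "0 < (1 - tt) * (1 - 3 * tt)" using vz a1 t by auto
    ultimately show ?thesis unfolding q by (intro divide_right_mono mult_left_mono) auto
  qed
  have aThr: "?a - Thr > 0" using thlt a1 by simp
  have alK: "al K \<le> At"
  proof -
    have alp: "al K > 0" using inv_all[OF P t2, of K] by simp
    have "uu K = al K * (?a - rho K)" unfolding uu_def rho_def using alp by (simp add: field_simps)
    then have "al K * (?a - rho K) \<le> vs * (?a - ?b)" using uK uu0 by simp
    moreover have "al K * (?a - Thr) \<le> al K * (?a - rho K)" using rK alp by (intro mult_left_mono) auto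
    ultimately have "al K * (?a - Thr) \<le> vs * (?a - ?b)" by linarith
    then show ?thesis unfolding At_def using aThr by (simp add: le_divide_eq)
  qed
  have Atp: "At > 0" unfolding At_def using vs rs rz aThr by simp
  define L where "L = nat \<lceil>2 * ln (At / Dd) / tt\<rceil>"
  have Lge: "real L \<ge> 2 * ln (At / Dd) / tt" unfolding L_def by linarith
  have Lle: "real L \<le> max 0 (2 * ln (At / Dd) / tt) + 1" unfolding L_def by linarith
  have b0: "0 \<le> 1 - tt / 2" using t by simp
  have pw: "(1 - tt / 2) ^ L \<le> exp (- (tt / 2) * real L)"
  proof -
    have "1 - tt / 2 \<le> exp (- (tt / 2))" using exp_ge_add_one_self[of "- (tt / 2)"] by simp
    then have "(1 - tt / 2) ^ L \<le> exp (- (tt / 2)) ^ L" using b0 by (rule power_mono)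
    also have "\<dots> = exp (- (tt / 2) * real L)" by (simp add: exp_of_nat_mult[symmetric] mult.commute)
    finally show ?thesis .
  qed
  have "exp (- (tt / 2) * real L) \<le> exp (- ln (At / Dd))"
  proof -
    have "tt / 2 * real L \<ge> ln (At / Dd)" using Lge t0 by (simp add: field_simps)
    then show ?thesis by simp
  qed
  also have "exp (- ln (At / Dd)) = Dd / At" using Atp Dd by (simp add: exp_minus ln_div exp_diff)
  finally have pw2: "(1 - tt / 2) ^ L \<le> Dd / At" using pw by simp
  have "al (K + L) \<le> al K * (1 - tt / 2) ^ L" by (rule al_pow[OF P t2])
  also have "\<dots> \<le> At * (Dd / At)"
    using alK pw2 inv_all[OF P t2, of K] b0 by (intro mult_mono) auto
  also have "\<dots> = Dd" using Atp by simp
  finally have alKL: "al (K + L) \<le> Dd" .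
  define m where "m = K + L + 1"
  have alm: "al m \<le> Dd" using al_mono_le[OF P t2, of "K + L" m] alKL unfolding m_def by simp
  have EL: "real L * P \<le> vz * (max 0 (2 * ln (At / Dd)) + tt) / (1 - tt)"
  proof -
    have "real L * P \<le> (max 0 (2 * ln (At / Dd) / tt) + 1) * P" using Lle P by (intro mult_right_mono) auto
    also have "\<dots> = vz * (tt * max 0 (2 * ln (At / Dd) / tt) + tt) / (1 - tt)"
      using auxL[of tt "max 0 (2 * ln (At / Dd) / tt)" vz] t Ptt by simp
    also have "tt * max 0 (2 * ln (At / Dd) / tt) = max 0 (2 * ln (At / Dd))"
      using auxmax[OF t0] .
    finally show ?thesis .
  qed
  have "real m * P = real K * P + real L * P + vz * tt / (1 - tt)"
    unfolding m_def auxm using Ptt by simp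
  then have "real m * P \<le> (2 * vz / (?a + 1)) * (ln ((?a - \<rho>s + 6 * tt) / (1 + \<rho>s - 6 * tt)) - ln ((?a - ?b) / (1 + ?b)))
        / ((1 - tt) * (1 - 3 * tt))
     + vz * (max 0 (2 * ln (At / Dd)) + tt) / (1 - tt) + vz * tt / (1 - tt)"
    using E1 EL by linarith
  then show ?thesis using alm unfolding m_def by (intro exI[of _ "K + L + 1"]) auto
qed

end

context sch
begin

lemma hbi_split: "has_bochner_integral M f x \<Longrightarrow> integrable M f \<and> integral\<^sup>L M f = x"
  by (simp add: has_bochner_integral_iff)

lemma code:
  assumes P: "P > 0" and t: "tt \<le> 1/100"
  shows "is_code vs rs vz rz (al n) (real n * P) 1 n enc dec1 dec2"
proof -
  have t2: "tt \<le> 1/2" using t by simp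
  have pos: "\<And>i. al i + \<bar>cc i\<bar> > 0" using inv_all[OF P t2] by (smt (verit))
  have X: "\<And>k. k < n \<Longrightarrow> integrable Mo (\<lambda>\<omega>. (chan_in enc (fst \<omega>) (snd \<omega>) k)\<^sup>2)
          \<and> integral\<^sup>L Mo (\<lambda>\<omega>. (chan_in enc (fst \<omega>) (snd \<omega>) k)\<^sup>2) = P"
  proof -
    fix k assume k: "k < n"
    have e: "(\<lambda>\<omega>. (chan_in enc (fst \<omega>) (snd \<omega>) k)\<^sup>2) = (\<lambda>\<omega>. lin (xv k) \<omega> * lin (xv k) \<omega>)"
      using chan_lin[OF k] by (simp add: power2_eq_square)
    show "integrable Mo (\<lambda>\<omega>. (chan_in enc (fst \<omega>) (snd \<omega>) k)\<^sup>2)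
          \<and> integral\<^sup>L Mo (\<lambda>\<omega>. (chan_in enc (fst \<omega>) (snd \<omega>) k)\<^sup>2) = P"
      unfolding e using hbi_split[OF lin_prod[of "xv k" "xv k"]] energy_step[OF P pos k] by simp
  qed
  have mo: "Bf (e1 n) (e1 n) = al n \<and> Bf (e2 n) (e2 n) = al n \<and> Bf (e1 n) (e2 n) = cc n"
    using moments[OF P pos] by simp
  have E1: "(\<lambda>\<omega>. (fst (fst \<omega> j) - dec1 (rx1 enc n (fst \<omega>) (snd \<omega>)) j)\<^sup>2) = (\<lambda>\<omega>. lin (e1 n) \<omega> * lin (e1 n) \<omega>)"
    if "j = 0" for j
    using err1_lin that by (simp add: power2_eq_square)
  have E2: "(\<lambda>\<omega>. (snd (fst \<omega> j) - dec2 (rx2 enc n (fst \<omega>) (snd \<omega>)) j)\<^sup>2) = (\<lambda>\<omega>. lin (e2 n) \<omega> * lin (e2 n) \<omega>)"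
    if "j = 0" for j
    using err2_lin that by (simp add: power2_eq_square)
  note h1 = hbi_split[OF lin_prod[of "e1 n" "e1 n"]]
  note h2 = hbi_split[OF lin_prod[of "e2 n" "e2 n"]]
  have sumX: "(\<Sum>k<n. integral\<^sup>L Mo (\<lambda>\<omega>. (chan_in enc (fst \<omega>) (snd \<omega>) k)\<^sup>2)) = real n * P"
    using X by simp
  show ?thesis
    unfolding is_code_def Let_def
    using X sumX E1 E2 h1 h2 mo by (simp add: chan_in_def)
qed

end

definition Ff :: "real \<Rightarrow> real \<Rightarrow> real \<Rightarrow> real \<Rightarrow> real \<Rightarrow> real \<Rightarrow> real \<Rightarrow> real" where
  "Ff vs rs vz rz D \<rho>s t =
     (2 * vz / ((2 - rz) + 1)) * (ln (((2 - rz) - \<rho>s + 6 * t) / (1 + \<rho>s - 6 * t)) - ln (((2 - rz) - \<bar>rs\<bar>) / (1 + \<bar>rs\<bar>)))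
        / ((1 - t) * (1 - 3 * t))
     + vz * (max 0 (2 * ln ((vs * ((2 - rz) - \<bar>rs\<bar>) / ((2 - rz) - max \<rho>s (3 * t))) / D)) + t) / (1 - t) + vz * t / (1 - t)"

lemma Ff_cont:
  assumes vs: "vs > 0" and rs: "\<bar>rs\<bar> < 1" and rz: "\<bar>rz\<bar> < 1" and D: "D > 0"
    and r: "0 \<le> \<rho>s" "\<rho>s \<le> \<bar>rs\<bar>"
  shows "continuous (at 0) (Ff vs rs vz rz D \<rho>s)"
proof -
  have a: "(2 - rz) - \<rho>s > 0" "1 + \<rho>s > 0" "(2 - rz) - \<bar>rs\<bar> > 0" using rz rs r by auto
  show ?thesis unfolding Ff_def[abs_def]
    using a vs D by (intro continuous_intros) (auto simp: max_def)
qed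


lemma ln_diff_eq: "(X::real) > 0 \<Longrightarrow> Y > 0 \<Longrightarrow> ln X - ln Y = ln (X / Y)"
  by (simp add: ln_div)

lemma ratio_aux2: "(N::real) \<noteq> 0 \<Longrightarrow> D \<noteq> 0 \<Longrightarrow> E \<noteq> 0 \<Longrightarrow> B \<noteq> 0 \<Longrightarrow>
  ((v * N / D) / E) / (N / B) = v * B / (D * E)"
  by (simp add: field_simps)

lemma Ff0:
  assumes vs: "vs > 0" and rs: "\<bar>rs\<bar> < 1" and vz: "vz > 0" and rz: "\<bar>rz\<bar> < 1" and D: "0 < D" "D \<le> vs"
  defines "\<rho>s \<equiv> max 0 ((2 - rz) - vs * ((2 - rz) - \<bar>rs\<bar>) / D)"
  shows "Ff vs rs vz rz D \<rho>s 0 = E_OL vs rs vz rz D"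
proof -
  define a where "a = 2 - rz"
  define b where "b = \<bar>rs\<bar>"
  have a1: "a > 1" "a < 3" unfolding a_def using rz by auto
  have b: "0 \<le> b" "b < 1" unfolding b_def using rs by auto
  have ab: "a - b > 0" using a1 b by simp
  have Dth: "D_th vs rs rz = vs * (a - b) / a" unfolding D_th_def a_def b_def by (simp add: algebra_simps)
  have F0: "Ff vs rs vz rz D \<rho>s 0 = (2 * vz / (a + 1)) * (ln ((a - \<rho>s) / (1 + \<rho>s)) - ln ((a - b) / (1 + b)))
      + vz * max 0 (2 * ln ((vs * (a - b) / (a - \<rho>s)) / D))"
  proof -
    have "max \<rho>s 0 = \<rho>s" unfolding \<rho>s_def by simp
    then show ?thesis unfolding Ff_def a_def[symmetric] b_def[symmetric] by simp
  qed
  show ?thesis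
  proof (cases "D_th vs rs rz \<le> D")
    case True
    then have le: "vs * (a - b) / a \<le> D" using Dth by simp
    define r where "r = a - vs * (a - b) / D"
    have r0: "r \<ge> 0"
    proof -
      have "vs * (a - b) \<le> D * a" using le a1 by (simp add: divide_le_eq)
      then have "vs * (a - b) / D \<le> a" using D by (simp add: divide_le_eq mult.commute)
      then show ?thesis unfolding r_def by simp
    qed
    have rs_eq: "\<rho>s = r" unfolding \<rho>s_def r_def a_def[symmetric] b_def[symmetric] using r0 r_def by simp
    have ar: "a - r = vs * (a - b) / D" unfolding r_def by simp
    have arp: "a - r > 0" unfolding ar using vs ab D by simp
    have r1: "1 + r > 0" using r0 by simp
    have one: "vs * (a - b) / (a - r) / D = 1" unfolding ar using vs ab D by simp
    have den: "D + (2 - rz) * (D - vs) + vs * \<bar>rs\<bar> = D * (1 + r)"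
      unfolding r_def a_def[symmetric] b_def[symmetric] using D by (simp add: field_simps)
    have "ln ((a - r) / (1 + r)) - ln ((a - b) / (1 + b)) = ln (((a - r) / (1 + r)) / ((a - b) / (1 + b)))"
      using arp r1 ab b by (intro ln_diff_eq) auto
    also have "((a - r) / (1 + r)) / ((a - b) / (1 + b)) = vs * (1 + b) / (D * (1 + r))"
      unfolding ar using ratio_aux2[of "a - b" D "1 + r" "1 + b" vs] ab b r1 D by simp
    finally have L: "ln ((a - r) / (1 + r)) - ln ((a - b) / (1 + b)) = ln (vs * (1 + \<bar>rs\<bar>) / (D + (2 - rz) * (D - vs) + vs * \<bar>rs\<bar>))"
      unfolding den b_def .
    have "E_OL vs rs vz rz D = 2 * vz / (3 - rz) * ln (vs * (1 + \<bar>rs\<bar>) / (D + (2 - rz) * (D - vs) + vs * \<bar>rs\<bar>))"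
      unfolding E_OL_def using True by simp
    moreover have "3 - rz = a + 1" unfolding a_def by simp
    ultimately show ?thesis unfolding F0 unfolding rs_eq one L by simp
  next
    case False
    then have lt: "D < vs * (a - b) / a" using Dth by simp
    have neg: "a - vs * (a - b) / D < 0"
    proof -
      have "D * a < vs * (a - b)" using lt a1 by (simp add: less_divide_eq)
      then have "a < vs * (a - b) / D" using D by (simp add: less_divide_eq mult.commute)
      then show ?thesis by simp
    qed
    have rs_eq: "\<rho>s = 0" unfolding \<rho>s_def a_def[symmetric] b_def[symmetric] using neg by simp
    have q: "vs * (a - b) / (a - 0) / D = (a - b) * vs / (a * D)" by (simp add: field_simps)
    have qg: "(a - b) * vs / (a * D) > 1" using lt a1 D by (simp add: field_simps)
    have lnp: "ln ((a - b) * vs / (a * D)) > 0" using qg by simp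
    have "ln ((a - 0) / (1 + 0)) - ln ((a - b) / (1 + b)) = ln (a / ((a - b) / (1 + b)))"
      using ln_diff_eq[of a "(a - b) / (1 + b)"] a1 ab b by simp
    also have "a / ((a - b) / (1 + b)) = a * (1 + b) / (a - b)" by simp
    finally have L: "ln ((a - 0) / (1 + 0)) - ln ((a - b) / (1 + b)) = ln (a * (1 + b) / (a - b))" .
    have "E_OL vs rs vz rz D = 2 * vz * (ln ((a - b) * vs / (a * D)) + 1 / (a + 1) * ln (a * (1 + b) / (a - b)))"
      unfolding E_OL_def using False unfolding a_def b_def by (simp add: algebra_simps)
    then show ?thesis unfolding F0 unfolding rs_eq q L using lnp by (simp add: algebra_simps)
  qed
qed


lemma is_code_mono:
  assumes "is_code vs rs vz rz D1 E1 m n f g1 g2" "D1 \<le> D2" "E1 \<le> E2"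
  shows "is_code vs rs vz rz D2 E2 m n f g1 g2"
proof -
  have "real m * D1 \<le> real m * D2" "real m * E1 \<le> real m * E2"
    using assms(2,3) by (auto intro: mult_left_mono)
  then show ?thesis using assms(1) unfolding is_code_def Let_def by (meson order.trans)
qed

lemma achievable_lower:
  assumes "achievable vs rs vz rz D E"
  shows "-1 \<le> E"
proof -
  obtain m n f g1 g2 where mn: "0 < m" "0 < n" and c: "is_code vs rs vz rz (D + 1) (E + 1) m n f g1 g2"
    using assms unfolding achievable_def by (meson zero_less_one)
  let ?M = "src_noise_space vs rs vz rz m n"
  have le: "(\<Sum>k<n. \<integral>\<omega>. (chan_in f (fst \<omega>) (snd \<omega>) k)\<^sup>2 \<partial>?M) \<le> real m * (E + 1)"
    using c unfolding is_code_def Let_def by blast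
  have "0 \<le> (\<Sum>k<n. \<integral>\<omega>. (chan_in f (fst \<omega>) (snd \<omega>) k)\<^sup>2 \<partial>?M)"
    by (intro sum_nonneg integral_nonneg) auto
  then have "0 \<le> real m * (E + 1)" using le by linarith
  then have "0 \<le> E + 1" using mn by (simp add: zero_le_mult_iff)
  then show ?thesis by simp
qed

lemma sch_tt:
  assumes "sch vs rs vz rz" "0 < t" "t < 1"
  shows "sch.tt vz (vz * t / (1 - t)) = t"
proof -
  interpret sch vs rs vz rz "vz * t / (1 - t)" 0 by fact
  have v: "vz > 0" by (rule vz)
  have "vz * t / (1 - t) + vz = vz / (1 - t)" using assms by (simp add: field_simps)
  then show ?thesis unfolding tt_def using v assms by simp
qed


theorem theorem4:
  fixes vs rs vz rz D :: real
  assumes "vs > 0" and "\<bar>rs\<bar> < 1" and "vz > 0" and "\<bar>rz\<bar> < 1"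
    and "0 < D" and "D \<le> vs"
  shows "energy_distortion vs rs vz rz D \<le> E_OL vs rs vz rz D"
proof -
  note vs = assms(1) and rs = assms(2) and vz = assms(3) and rz = assms(4) and D = assms(5,6)
  have S: "sch vs rs vz rz" using vs rs vz rz by unfold_locales
  let ?S = "{E. achievable vs rs vz rz D E}"
  have bdd: "bdd_below ?S"
    unfolding bdd_below_def using achievable_lower by blast
  define \<rho>s where "\<rho>s = max 0 ((2 - rz) - vs * ((2 - rz) - \<bar>rs\<bar>) / D)"
  have r0: "0 \<le> \<rho>s" unfolding \<rho>s_def by simp
  have r1: "\<rho>s \<le> \<bar>rs\<bar>"
  proof -
    have ab: "(2 - rz) - \<bar>rs\<bar> > 0" using rs rz by simp
    have "(2 - rz) - \<bar>rs\<bar> \<le> vs * ((2 - rz) - \<bar>rs\<bar>) / D"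
      using D ab by (simp add: le_divide_eq mult_right_mono)
    then show ?thesis unfolding \<rho>s_def using rs by simp
  qed
  have F0: "Ff vs rs vz rz D \<rho>s 0 = E_OL vs rs vz rz D"
    unfolding \<rho>s_def using Ff0[OF vs rs vz rz D] .
  have lim0: "(Ff vs rs vz rz D \<rho>s \<longlongrightarrow> Ff vs rs vz rz D \<rho>s 0) (at 0)"
    using Ff_cont[OF vs rs rz D(1) r0 r1, of vz] by (simp add: continuous_at)
  have lim: "(Ff vs rs vz rz D \<rho>s \<longlongrightarrow> E_OL vs rs vz rz D) (at 0)"
    using lim0 unfolding F0 .
  have mem: "achievable vs rs vz rz D (E_OL vs rs vz rz D)"
    unfolding achievable_def
  proof (intro allI impI)
    fix \<epsilon> :: real assume \<epsilon>: "\<epsilon> > 0"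
    have "eventually (\<lambda>t. Ff vs rs vz rz D \<rho>s t < E_OL vs rs vz rz D + \<epsilon>) (at 0)"
      using order_tendstoD(2)[OF lim] \<epsilon> by simp
    then obtain d where d: "d > 0" and dd: "\<And>t. t \<noteq> 0 \<Longrightarrow> dist t 0 < d \<Longrightarrow> Ff vs rs vz rz D \<rho>s t < E_OL vs rs vz rz D + \<epsilon>"
      unfolding eventually_at by blast
    define t where "t = min (d / 2) (1 / 100)"
    have t: "0 < t" "t \<le> 1 / 100" "t < 1" using d unfolding t_def by auto
    have Ft: "Ff vs rs vz rz D \<rho>s t < E_OL vs rs vz rz D + \<epsilon>"
      using dd[of t] t d unfolding t_def by auto
    define P where "P = vz * t / (1 - t)"
    have P: "P > 0" unfolding P_def using vz t by simp
    interpret S0: sch vs rs vz rz P 0 by (rule S)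
    have tt: "S0.tt = t" unfolding P_def by (rule sch_tt[OF S t(1) t(3)])
    obtain m where m: "m > 0" "S0.al m \<le> D"
      and mE: "real m * P \<le> Ff vs rs vz rz D \<rho>s t"
      using S0.analysis[OF P _ r0 r1 D(1)] t unfolding tt Ff_def by auto
    interpret S1: sch vs rs vz rz P m by (rule S)
    have c: "is_code vs rs vz rz (S1.al m) (real m * P) 1 m S1.enc S1.dec1 S1.dec2"
      using S1.code[OF P] t tt by simp
    have "is_code vs rs vz rz (D + \<epsilon>) (E_OL vs rs vz rz D + \<epsilon>) 1 m S1.enc S1.dec1 S1.dec2"
      by (rule is_code_mono[OF c]) (use m mE Ft \<epsilon> in auto)
    then show "\<exists>m n f g1 g2. 0 < m \<and> 0 < n \<and> is_code vs rs vz rz (D + \<epsilon>) (E_OL vs rs vz rz D + \<epsilon>) m n f g1 g2"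
      using m by blast
  qed
  show ?thesis unfolding energy_distortion_def
    by (rule cInf_lower[OF _ bdd]) (use mem in simp)
qed

end
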